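(* Let $(M,d)$ be a pointed metric space. The space $\mathrm{Lip}_0(M)$ has the LD2P if and only if for every optimal $\mu\in ba(\widetilde M)$ with $\|\mu\|=1$ and every $\gamma\in(0,1)$ there exist $A\subseteq\widetilde M$ and $u,v\in M$ with $u\ne v$ such that $\mu(A)\ge\gamma$ and both $A\cup\{(u,v)\}$ and $A\cup\{(v,u)\}$ are $\gamma$-cyclically monotonic.
   Context: $M$ has base point $0$; $\mathrm{Lip}_0(M)$ is the real Banach space of Lipschitz $f\colon M\to\mathbb R$ with $f(0)=0$, normed by the best Lipschitz constant. A Banach space $X$ has the local diameter 2 property (LD2P) if every slice $S(x^*,\alpha)=\{x\in B_X: x^*(x)>1-\alpha\}$ ($x^*\in X^*$, $\|x^*\|=1$, $\alpha>0$) of the unit ball has diameter $2$. $\widetilde M=\{(x,y)\in M\times M:x\ne y\}$. $ba(\widetilde M)$ is the Banach space of bounded finitely additive signed measures on the power set of $\widetilde M$ with norm $|\mu|(\widetilde M)$. $\Phi f(x,y)=(f(x)-f(y))/d(x,y)$ (de Leeuw map) and $(\Phi^*\mu)(f)=\int_{\widetilde M}\Phi f\,d\mu$. $\mu$ is optimal if it is positive and $\|\Phi^*\mu\|=\|\mu\|$. For $\gamma\in(0,1]$, $A\subseteq\widetilde M$ is $\gamma$-cyclically monotonic if for every finite sequence $(x_1,y_1),\dots,(x_n,y_n)\in A$, with $y_{n+1}=y_1$, $\sum_{i=1}^n\min\{d(x_i,y_{i+1})-\gamma d(x_i,y_i),\,d(y_i,y_{i+1})\}\ge0$. *)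

theory Defs
  imports "HOL-Analysis.Analysis"
begin

text \<open>The pointed metric space is the type 'a (class metric_space) with base point z.\<close>

definition Lip0 :: "'a::metric_space \<Rightarrow> ('a \<Rightarrow> real) set" where
  "Lip0 z = {f. (\<exists>C. lipschitz_on C UNIV f) \<and> f z = 0}"

definition lipnorm :: "('a::metric_space \<Rightarrow> real) \<Rightarrow> real" where
  "lipnorm f = Inf {C. lipschitz_on C UNIV f}"

definition lip0_dual :: "'a::metric_space \<Rightarrow> (('a \<Rightarrow> real) \<Rightarrow> real) \<Rightarrow> bool" where
  "lip0_dual z \<phi> \<longleftrightarrow>
     (\<forall>f\<in>Lip0 z. \<forall>g\<in>Lip0 z. \<phi> (\<lambda>x. f x + g x) = \<phi> f + \<phi> g) \<and>
     (\<forall>c. \<forall>f\<in>Lip0 z. \<phi> (\<lambda>x. c * f x) = c * \<phi> f) \<and>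
     (\<exists>C. \<forall>f\<in>Lip0 z. \<bar>\<phi> f\<bar> \<le> C * lipnorm f)"

definition lip0_ball :: "'a::metric_space \<Rightarrow> ('a \<Rightarrow> real) set" where
  "lip0_ball z = {f \<in> Lip0 z. lipnorm f \<le> 1}"

definition dual_norm :: "'a::metric_space \<Rightarrow> (('a \<Rightarrow> real) \<Rightarrow> real) \<Rightarrow> real" where
  "dual_norm z \<phi> = (SUP f \<in> lip0_ball z. \<bar>\<phi> f\<bar>)"

definition slice :: "'a::metric_space \<Rightarrow> (('a \<Rightarrow> real) \<Rightarrow> real) \<Rightarrow> real \<Rightarrow> ('a \<Rightarrow> real) set" where
  "slice z \<phi> \<alpha> = {f \<in> lip0_ball z. \<phi> f > 1 - \<alpha>}"

definition lip0_diam :: "('a::metric_space \<Rightarrow> real) set \<Rightarrow> real" where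
  "lip0_diam S = (SUP p \<in> S \<times> S. lipnorm (\<lambda>x. fst p x - snd p x))"

definition LD2P :: "'a::metric_space \<Rightarrow> bool" where
  "LD2P z \<longleftrightarrow> (\<forall>\<phi> \<alpha>. lip0_dual z \<phi> \<and> dual_norm z \<phi> = 1 \<and> \<alpha> > 0 \<longrightarrow>
                    lip0_diam (slice z \<phi> \<alpha>) = 2)"

definition offdiag :: "('a \<times> 'a) set" where
  "offdiag = {(x, y). x \<noteq> y}"

text \<open>Bounded finitely additive signed measures on the power set of offdiag
  (only the values on subsets of offdiag are relevant).\<close>
definition ba_measure :: "(('a \<times> 'a) set \<Rightarrow> real) \<Rightarrow> bool" where
  "ba_measure \<mu> \<longleftrightarrow>
     (\<forall>A B. A \<subseteq> offdiag \<and> B \<subseteq> offdiag \<and> A \<inter> B = {} \<longrightarrow> \<mu> (A \<union> B) = \<mu> A + \<mu> B) \<and>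
     (\<exists>C. \<forall>A. A \<subseteq> offdiag \<longrightarrow> \<bar>\<mu> A\<bar> \<le> C)"

definition ba_norm :: "(('a \<times> 'a) set \<Rightarrow> real) \<Rightarrow> real" where
  "ba_norm \<mu> = (SUP P \<in> {P. finite P \<and> disjoint P \<and> (\<forall>A\<in>P. A \<subseteq> offdiag)}. \<Sum>A\<in>P. \<bar>\<mu> A\<bar>)"

definition fin_partition :: "('a \<times> 'a) set set \<Rightarrow> bool" where
  "fin_partition P \<longleftrightarrow> finite P \<and> disjoint P \<and> {} \<notin> P \<and> \<Union>P = offdiag"

text \<open>Integral of a bounded function against a bounded finitely additive measure,
  as the (Moore-Smith) limit of Riemann sums over refining finite partitions.\<close>
definition ba_integral :: "(('a \<times> 'a) set \<Rightarrow> real) \<Rightarrow> ('a \<times> 'a \<Rightarrow> real) \<Rightarrow> real" where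
  "ba_integral \<mu> g = (THE I. \<forall>\<epsilon>>0. \<exists>P. fin_partition P \<and>
      (\<forall>Q t. fin_partition Q \<and> (\<forall>B\<in>Q. \<exists>A\<in>P. B \<subseteq> A) \<and> (\<forall>B\<in>Q. t B \<in> B) \<longrightarrow>
          \<bar>(\<Sum>B\<in>Q. g (t B) * \<mu> B) - I\<bar> < \<epsilon>))"

definition de_leeuw :: "('a::metric_space \<Rightarrow> real) \<Rightarrow> 'a \<times> 'a \<Rightarrow> real" where
  "de_leeuw f = (\<lambda>(x, y). (f x - f y) / dist x y)"

definition Phi_star :: "(('a::metric_space \<times> 'a) set \<Rightarrow> real) \<Rightarrow> ('a \<Rightarrow> real) \<Rightarrow> real" where
  "Phi_star \<mu> f = ba_integral \<mu> (de_leeuw f)"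

definition optimal :: "'a::metric_space \<Rightarrow> (('a \<times> 'a) set \<Rightarrow> real) \<Rightarrow> bool" where
  "optimal z \<mu> \<longleftrightarrow> (\<forall>A. A \<subseteq> offdiag \<longrightarrow> \<mu> A \<ge> 0) \<and> dual_norm z (Phi_star \<mu>) = ba_norm \<mu>"

definition cyc_mono :: "real \<Rightarrow> ('a::metric_space \<times> 'a) set \<Rightarrow> bool" where
  "cyc_mono \<gamma> A \<longleftrightarrow> (\<forall>n::nat. \<forall>x y :: nat \<Rightarrow> 'a. (\<forall>i<n. (x i, y i) \<in> A) \<longrightarrow>
      (\<Sum>i<n. min (dist (x i) (y (Suc i mod n)) - \<gamma> * dist (x i) (y i))
                 (dist (y i) (y (Suc i mod n)))) \<ge> 0)"

end

theory Submission
  imports Defs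
begin


lemma lipnorm_le:
  assumes "lipschitz_on C UNIV f" shows "lipnorm f \<le> C"
  unfolding lipnorm_def
  by (rule cInf_lower) (use assms in \<open>auto simp: bdd_below_def lipschitz_on_def\<close>)

lemma lipnorm_lip:
  assumes "\<exists>C. lipschitz_on C UNIV f" shows "lipschitz_on (lipnorm f) UNIV f"
proof -
  let ?S = "{C. lipschitz_on C UNIV f}"
  have ne: "?S \<noteq> {}" using assms by auto
  have "0 \<le> Inf ?S" by (rule cInf_greatest[OF ne]) (auto simp: lipschitz_on_def)
  moreover have "dist (f x) (f y) \<le> Inf ?S * dist x y" for x y
  proof (cases "x = y")
    case True then show ?thesis by simp
  next
    case False
    then have d: "dist x y > 0" by simp
    have "dist (f x) (f y) / dist x y \<le> Inf ?S"
      by (rule cInf_greatest[OF ne]) (use d in \<open>auto simp: lipschitz_on_def divide_le_eq\<close>)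
    then show ?thesis using d by (simp add: divide_le_eq)
  qed
  ultimately show ?thesis unfolding lipnorm_def lipschitz_on_def by auto
qed

lemma lip_bound:
  assumes "\<exists>C. lipschitz_on C UNIV f" shows "\<bar>f x - f y\<bar> \<le> lipnorm f * dist x y"
  using lipnorm_lip[OF assms] unfolding lipschitz_on_def by (auto simp: dist_real_def)

lemma lipnorm_nonneg:
  assumes "\<exists>C. lipschitz_on C UNIV f" shows "0 \<le> lipnorm f"
  using lipnorm_lip[OF assms] unfolding lipschitz_on_def by auto

lemma lipschitz_onI1:
  assumes "\<And>a b. \<bar>f a - f b\<bar> \<le> C * dist a b" "0 \<le> C"
  shows "lipschitz_on C UNIV f"
  using assms unfolding lipschitz_on_def by (auto simp: dist_real_def)

lemma de_leeuw_bound: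
  assumes "\<exists>C. lipschitz_on C UNIV f" shows "\<bar>de_leeuw f p\<bar> \<le> lipnorm f"
proof (cases p)
  case (Pair x y)
  show ?thesis
  proof (cases "x = y")
    case True then show ?thesis using Pair lipnorm_nonneg[OF assms] by (simp add: de_leeuw_def)
  next
    case False
    then have d: "dist x y > 0" by simp
    have "\<bar>f x - f y\<bar> / dist x y \<le> lipnorm f"
      using lip_bound[OF assms, of x y] d by (simp add: divide_le_eq)
    then show ?thesis using Pair by (simp add: de_leeuw_def abs_divide)
  qed
qed

lemma sum_mod_shift: "(\<Sum>i<n. a (Suc i mod n)) = (\<Sum>i<n. (a i::real))"
proof (cases n)
  case 0 then show ?thesis by simp
next
  case (Suc m)
  have "(\<Sum>i<Suc m. a (Suc i mod Suc m)) = (\<Sum>i<m. a (Suc i mod Suc m)) + a 0"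
    by simp
  also have "(\<Sum>i<m. a (Suc i mod Suc m)) = (\<Sum>i<m. a (Suc i))"
    by (rule sum.cong) auto
  also have "(\<Sum>i<m. a (Suc i)) + a 0 = (\<Sum>i<Suc m. a i)"
    by (simp only: sum.lessThan_Suc_shift add.commute)
  finally show ?thesis using Suc by simp
qed

lemma cyc_mono_from_fun:
  assumes lip: "\<And>a b. h a - h b \<le> dist a b"
    and S: "\<And>x y. (x,y) \<in> S \<Longrightarrow> h x - h y \<ge> \<gamma> * dist x y"
  shows "cyc_mono \<gamma> S"
  unfolding cyc_mono_def
proof (intro allI impI)
  fix n :: nat and x y :: "nat \<Rightarrow> 'a"
  assume xy: "\<forall>i<n. (x i, y i) \<in> S"
  have "(\<Sum>i<n. h (y i) - h (y (Suc i mod n))) \<le>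
        (\<Sum>i<n. min (dist (x i) (y (Suc i mod n)) - \<gamma> * dist (x i) (y i)) (dist (y i) (y (Suc i mod n))))"
  proof (rule sum_mono)
    fix i assume "i \<in> {..<n}"
    then have "(x i, y i) \<in> S" using xy by auto
    then have "h (x i) - h (y i) \<ge> \<gamma> * dist (x i) (y i)" by (rule S)
    moreover have "h (x i) - h (y (Suc i mod n)) \<le> dist (x i) (y (Suc i mod n))" by (rule lip)
    moreover have "h (y i) - h (y (Suc i mod n)) \<le> dist (y i) (y (Suc i mod n))" by (rule lip)
    ultimately show "h (y i) - h (y (Suc i mod n)) \<le> min (dist (x i) (y (Suc i mod n)) - \<gamma> * dist (x i) (y i)) (dist (y i) (y (Suc i mod n)))"
      by simp
  qed
  moreover have "(\<Sum>i<n. h (y i) - h (y (Suc i mod n))) = 0"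
    by (simp add: sum_subtractf sum_mod_shift[of "\<lambda>i. h (y i)"])
  ultimately show "0 \<le> (\<Sum>i<n. min (dist (x i) (y (Suc i mod n)) - \<gamma> * dist (x i) (y i)) (dist (y i) (y (Suc i mod n))))"
    by simp
qed

definition cval :: "real \<Rightarrow> 'a::metric_space \<Rightarrow> nat \<Rightarrow> (nat \<Rightarrow> 'a) \<Rightarrow> (nat \<Rightarrow> 'a) \<Rightarrow> 'a \<Rightarrow> real" where
  "cval g r n x y w = (if n = 0 then - dist r w else
     - dist r (y 0) - (\<Sum>i<n-1. dist (x i) (y (Suc i))) + g * (\<Sum>i<n. dist (x i) (y i)) - dist (x (n-1)) w)"

lemma cval_bound:
  assumes cm: "cyc_mono g S" and xy: "\<forall>i<n. (x i, y i) \<in> S"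
  shows "cval g r n x y w \<le> dist w r"
proof (cases n)
  case 0 then show ?thesis by (simp add: cval_def dist_commute)
next
  case (Suc m)
  have "0 \<le> (\<Sum>i<Suc m. min (dist (x i) (y (Suc i mod Suc m)) - g * dist (x i) (y i)) (dist (y i) (y (Suc i mod Suc m))))"
    using cm xy Suc unfolding cyc_mono_def by blast
  also have "\<dots> \<le> (\<Sum>i<Suc m. dist (x i) (y (Suc i mod Suc m)) - g * dist (x i) (y i))"
    by (rule sum_mono) simp
  also have "\<dots> = (\<Sum>i<Suc m. dist (x i) (y (Suc i mod Suc m))) - g * (\<Sum>i<Suc m. dist (x i) (y i))"
    by (simp only: sum_subtractf sum_distrib_left)
  also have "(\<Sum>i<Suc m. dist (x i) (y (Suc i mod Suc m))) = (\<Sum>i<m. dist (x i) (y (Suc i mod Suc m))) + dist (x m) (y 0)"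
    by simp
  also have "(\<Sum>i<m. dist (x i) (y (Suc i mod Suc m))) = (\<Sum>i<m. dist (x i) (y (Suc i)))"
    by (rule sum.cong) auto
  finally have *: "0 \<le> (\<Sum>i<m. dist (x i) (y (Suc i))) + dist (x m) (y 0) - g * (\<Sum>i<Suc m. dist (x i) (y i))" .
  have "dist (x m) (y 0) \<le> dist (x m) w + dist w r + dist r (y 0)"
    by (metis add.commute add_le_cancel_left dist_triangle dist_triangle_le order_trans)
  then show ?thesis using * Suc by (simp add: cval_def)
qed

lemma cval_mono_w: "cval g r n x y w \<le> cval g r n x y w' + dist w w'"
proof -
  have "dist r w' \<le> dist r w + dist w w'" "dist (x (n-1)) w' \<le> dist (x (n-1)) w + dist w w'"
    by (simp_all add: dist_triangle)
  then show ?thesis by (simp add: cval_def)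
qed

lemma cval_ext:
  "cval g r (Suc n) (x(n:=a)) (y(n:=b)) a = cval g r n x y b + g * dist a b"
proof (cases n)
  case 0 then show ?thesis by (simp add: cval_def)
next
  case (Suc m)
  have e1: "(\<Sum>i<n. dist ((x(n:=a)) i) ((y(n:=b)) (Suc i))) = (\<Sum>i<m. dist (x i) (y (Suc i))) + dist (x m) b"
    using Suc by (simp add: sum.cong[of _ _ "\<lambda>i. dist ((x(n:=a)) i) ((y(n:=b)) (Suc i))" "\<lambda>i. dist (x i) (y (Suc i))"])
  have e2: "(\<Sum>i<Suc n. dist ((x(n:=a)) i) ((y(n:=b)) i)) = (\<Sum>i<n. dist (x i) (y i)) + dist a b"
    by simp
  show ?thesis using Suc e1 e2 by (simp add: cval_def algebra_simps)
qed

definition Hfun :: "real \<Rightarrow> ('a::metric_space \<times> 'a) set \<Rightarrow> 'a \<Rightarrow> 'a \<Rightarrow> real" where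
  "Hfun g S r w = Sup {cval g r n x y w | n x y. \<forall>i<n. (x i, y i) \<in> S}"

lemma Hfun_props:
  assumes cm: "cyc_mono g S"
  shows "\<And>w w'. Hfun g S r w - Hfun g S r w' \<le> dist w w'"
    and "\<And>a b. (a,b) \<in> S \<Longrightarrow> Hfun g S r a - Hfun g S r b \<ge> g * dist a b"
proof -
  let ?T = "\<lambda>w. {cval g r n x y w | n x y. \<forall>i<n. (x i, y i) \<in> S}"
  have ne: "?T w \<noteq> {}" for w by (auto intro!: exI[of _ 0])
  have bdd: "bdd_above (?T w)" for w
    unfolding bdd_above_def using cval_bound[OF cm] by blast
  have up: "cval g r n x y w \<le> Hfun g S r w" if "\<forall>i<n. (x i, y i) \<in> S" for n x y w
    unfolding Hfun_def by (rule cSup_upper[OF _ bdd]) (use that in blast)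
  show "Hfun g S r w - Hfun g S r w' \<le> dist w w'" for w w'
  proof -
    have "Hfun g S r w \<le> Hfun g S r w' + dist w w'"
      unfolding Hfun_def[of g S r w]
    proof (rule cSup_least[OF ne])
      fix v assume "v \<in> ?T w"
      then obtain n x y where "v = cval g r n x y w" "\<forall>i<n. (x i, y i) \<in> S" by blast
      then show "v \<le> Hfun g S r w' + dist w w'"
        using cval_mono_w[of g r n x y w w'] up[of n x y w'] by simp
    qed
    then show ?thesis by simp
  qed
  show "Hfun g S r a - Hfun g S r b \<ge> g * dist a b" if ab: "(a,b) \<in> S" for a b
  proof -
    have "Hfun g S r b \<le> Hfun g S r a - g * dist a b"
      unfolding Hfun_def[of g S r b]
    proof (rule cSup_least[OF ne])
      fix v assume "v \<in> ?T b"
      then obtain n x y where v: "v = cval g r n x y b" and xy: "\<forall>i<n. (x i, y i) \<in> S" by blast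
      have "\<forall>i<Suc n. ((x(n:=a)) i, (y(n:=b)) i) \<in> S" using xy ab by auto
      then have "cval g r (Suc n) (x(n:=a)) (y(n:=b)) a \<le> Hfun g S r a" by (rule up)
      then show "v \<le> Hfun g S r a - g * dist a b" using v cval_ext[of g r n x a y b] by simp
    qed
    then show ?thesis by simp
  qed
qed

lemma cyc_mono_fun:
  assumes "cyc_mono g S"
  shows "\<exists>h. (\<forall>a b. h a - h b \<le> dist a b) \<and> (\<forall>a b. (a,b) \<in> S \<longrightarrow> h a - h b \<ge> g * dist a b) \<and> h z = 0"
proof -
  define h where "h w = Hfun g S z w - Hfun g S z z" for w
  show ?thesis using Hfun_props[OF assms, where r=z] by (intro exI[of _ h]) (auto simp: h_def)
qed


definition refines :: "'b set set \<Rightarrow> 'b set set \<Rightarrow> bool" where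
  "refines Q P \<longleftrightarrow> (\<forall>B\<in>Q. \<exists>A\<in>P. B \<subseteq> A)"

definition meet :: "'b set set \<Rightarrow> 'b set set \<Rightarrow> 'b set set" where
  "meet P Q = (\<lambda>(C,D). C \<inter> D) ` (P \<times> Q) - {{}}"

lemma meet_part:
  assumes P: "fin_partition (P :: ('a \<times> 'a) set set)" and Q: "fin_partition Q"
  shows "fin_partition (meet P Q)" "refines (meet P Q) P" "refines (meet P Q) Q"
proof -
  show "fin_partition (meet P Q)"
    unfolding fin_partition_def
  proof (intro conjI)
    show "finite (meet P Q)" using P Q unfolding meet_def fin_partition_def
      by (intro finite_Diff finite_imageI finite_cartesian_product) auto
    show "{} \<notin> meet P Q" by (simp add: meet_def)
    show "disjoint (meet P Q)"
    proof (rule pairwiseI)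
      fix X Y assume X: "X \<in> meet P Q" and Y: "Y \<in> meet P Q" and ne: "X \<noteq> Y"
      from X obtain C D where C: "C \<in> P" "D \<in> Q" "X = C \<inter> D" unfolding meet_def by auto
      from Y obtain C' D' where C': "C' \<in> P" "D' \<in> Q" "Y = C' \<inter> D'" unfolding meet_def by auto
      have "C = C' \<or> disjnt C C'" using P C C' unfolding fin_partition_def pairwise_def by blast
      moreover have "D = D' \<or> disjnt D D'" using Q C C' unfolding fin_partition_def pairwise_def by blast
      ultimately show "disjnt X Y" using ne C C' unfolding disjnt_def by blast
    qed
    show "\<Union> (meet P Q) = offdiag"
    proof
      show "\<Union> (meet P Q) \<subseteq> offdiag"
      proof
        fix x assume "x \<in> \<Union> (meet P Q)"
        then obtain C D where "C \<in> P" "D \<in> Q" "x \<in> C" unfolding meet_def by auto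
        then show "x \<in> offdiag" using P unfolding fin_partition_def by auto
      qed
      show "offdiag \<subseteq> \<Union> (meet P Q)"
      proof
        fix x :: "'a \<times> 'a" assume "x \<in> offdiag"
        then obtain C D :: "('a \<times> 'a) set" where "C \<in> P" "D \<in> Q" "x \<in> C" "x \<in> D" using P Q unfolding fin_partition_def by blast
        then show "x \<in> \<Union> (meet P Q)" unfolding meet_def by blast
      qed
    qed
  qed
  show "refines (meet P Q) P" "refines (meet P Q) Q" unfolding refines_def meet_def by auto
qed



definition tg :: "'b set \<Rightarrow> 'b" where "tg B = (SOME x. x \<in> B)"

lemma tg_in: "B \<noteq> {} \<Longrightarrow> tg B \<in> B"
  unfolding tg_def by (rule someI_ex) blast

lemma part_tg: "fin_partition P \<Longrightarrow> B \<in> P \<Longrightarrow> tg B \<in> B"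
  by (rule tg_in) (auto simp: fin_partition_def)

definition has_baint :: "(('a \<times> 'a) set \<Rightarrow> real) \<Rightarrow> ('a \<times> 'a \<Rightarrow> real) \<Rightarrow> real \<Rightarrow> bool" where
  "has_baint \<mu> g I \<longleftrightarrow> (\<forall>\<epsilon>>0. \<exists>P. fin_partition P \<and>
      (\<forall>Q t. fin_partition Q \<and> (\<forall>B\<in>Q. \<exists>A\<in>P. B \<subseteq> A) \<and> (\<forall>B\<in>Q. t B \<in> B) \<longrightarrow>
          \<bar>(\<Sum>B\<in>Q. g (t B) * \<mu> B) - I\<bar> < \<epsilon>))"

lemma has_baintD:
  assumes "has_baint \<mu> g I" "\<epsilon> > 0"
  obtains P where "fin_partition P" "\<And>Q t. fin_partition Q \<Longrightarrow> refines Q P \<Longrightarrow> (\<forall>B\<in>Q. t B \<in> B) \<Longrightarrow>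
          \<bar>(\<Sum>B\<in>Q. g (t B) * \<mu> B) - I\<bar> < \<epsilon>"
  using assms unfolding has_baint_def refines_def by metis

lemma has_baintI:
  assumes "\<And>\<epsilon>. \<epsilon> > 0 \<Longrightarrow> \<exists>P. fin_partition P \<and> (\<forall>Q t. fin_partition Q \<longrightarrow> refines Q P \<longrightarrow> (\<forall>B\<in>Q. t B \<in> B) \<longrightarrow>
          \<bar>(\<Sum>B\<in>Q. g (t B) * \<mu> B) - I\<bar> < \<epsilon>)"
  shows "has_baint \<mu> g I"
  using assms unfolding has_baint_def refines_def by metis



lemma refines_trans: "refines R Q \<Longrightarrow> refines Q P \<Longrightarrow> refines R P"
  unfolding refines_def by (meson subset_trans)

lemma refines_refl: "refines R R"
  unfolding refines_def by auto

lemma has_baintE: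
  assumes "has_baint \<mu> g I" "\<epsilon> > 0"
  shows "\<exists>P. fin_partition P \<and> (\<forall>Q t. fin_partition Q \<longrightarrow> refines Q P \<longrightarrow> (\<forall>B\<in>Q. t B \<in> B) \<longrightarrow>
          \<bar>(\<Sum>B\<in>Q. g (t B) * \<mu> B) - I\<bar> < \<epsilon>)"
proof -
  have X: "\<exists>P. fin_partition P \<and> (\<forall>Q t. fin_partition Q \<and> (\<forall>B\<in>Q. \<exists>A\<in>P. B \<subseteq> A) \<and> (\<forall>B\<in>Q. t B \<in> B) \<longrightarrow>
          \<bar>(\<Sum>B\<in>Q. g (t B) * \<mu> B) - I\<bar> < \<epsilon>)"
    using mp[OF spec[OF assms(1)[unfolded has_baint_def], of \<epsilon>] assms(2)] .
  then obtain P where P: "fin_partition P" and H: "\<forall>Q t. fin_partition Q \<and> (\<forall>B\<in>Q. \<exists>A\<in>P. B \<subseteq> A) \<and> (\<forall>B\<in>Q. t B \<in> B) \<longrightarrow>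
          \<bar>(\<Sum>B\<in>Q. g (t B) * \<mu> B) - I\<bar> < \<epsilon>"
    by (elim exE conjE)
  show ?thesis
  proof (intro exI conjI allI impI)
    fix Q t assume Q: "fin_partition Q" "refines Q P" "\<forall>B\<in>Q. t B \<in> B"
    have "fin_partition Q \<and> (\<forall>B\<in>Q. \<exists>A\<in>P. B \<subseteq> A) \<and> (\<forall>B\<in>Q. t B \<in> B)"
      using Q unfolding refines_def by (intro conjI)
    then show "\<bar>(\<Sum>B\<in>Q. g (t B) * \<mu> B) - I\<bar> < \<epsilon>" using H by (elim allE impE)
  qed (rule P)
qed

lemma baint_two:
  assumes "has_baint \<mu> g I" "has_baint \<mu> h J" "\<epsilon> > 0"
  shows "\<exists>R. fin_partition R \<and> (\<forall>Q t. fin_partition Q \<longrightarrow> refines Q R \<longrightarrow> (\<forall>B\<in>Q. t B \<in> B) \<longrightarrow>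
          \<bar>(\<Sum>B\<in>Q. g (t B) * \<mu> B) - I\<bar> < \<epsilon> \<and> \<bar>(\<Sum>B\<in>Q. h (t B) * \<mu> B) - J\<bar> < \<epsilon>)"
proof -
  obtain P where P1: "fin_partition P" and P2: "\<forall>Q t. fin_partition Q \<longrightarrow> refines Q P \<longrightarrow> (\<forall>B\<in>Q. t B \<in> B) \<longrightarrow>
          \<bar>(\<Sum>B\<in>Q. g (t B) * \<mu> B) - I\<bar> < \<epsilon>" using has_baintE[OF assms(1,3)] by blast
  obtain P' where P'1: "fin_partition P'" and P'2: "\<forall>Q t. fin_partition Q \<longrightarrow> refines Q P' \<longrightarrow> (\<forall>B\<in>Q. t B \<in> B) \<longrightarrow>
          \<bar>(\<Sum>B\<in>Q. h (t B) * \<mu> B) - J\<bar> < \<epsilon>" using has_baintE[OF assms(2,3)] by blast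
  note m = meet_part[OF P1 P'1]
  show ?thesis
  proof (intro exI conjI allI impI)
    fix Q t assume Q: "fin_partition Q" "refines Q (meet P P')" "\<forall>B\<in>Q. t B \<in> B"
    have r: "refines Q P" "refines Q P'" using refines_trans[OF Q(2)] m(2,3) by auto
    show "\<bar>(\<Sum>B\<in>Q. g (t B) * \<mu> B) - I\<bar> < \<epsilon>" by (rule P2[rule_format, OF Q(1) r(1)]) (use Q(3) in auto)
    show "\<bar>(\<Sum>B\<in>Q. h (t B) * \<mu> B) - J\<bar> < \<epsilon>" by (rule P'2[rule_format, OF Q(1) r(2)]) (use Q(3) in auto)
  qed (rule m(1))
qed

lemma baint_two_tg:
  assumes "has_baint \<mu> g I" "has_baint \<mu> h J" "\<epsilon> > 0"
  shows "\<exists>R. fin_partition R \<and> \<bar>(\<Sum>B\<in>R. g (tg B) * \<mu> B) - I\<bar> < \<epsilon> \<and> \<bar>(\<Sum>B\<in>R. h (tg B) * \<mu> B) - J\<bar> < \<epsilon>"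
proof -
  obtain R where R1: "fin_partition R" and R2: "\<forall>Q t. fin_partition Q \<longrightarrow> refines Q R \<longrightarrow> (\<forall>B\<in>Q. t B \<in> B) \<longrightarrow>
          \<bar>(\<Sum>B\<in>Q. g (t B) * \<mu> B) - I\<bar> < \<epsilon> \<and> \<bar>(\<Sum>B\<in>Q. h (t B) * \<mu> B) - J\<bar> < \<epsilon>"
    using baint_two[OF assms] by blast
  have tt: "\<forall>B\<in>R. tg B \<in> B" using part_tg[OF R1] by auto
  have "\<bar>(\<Sum>B\<in>R. g (tg B) * \<mu> B) - I\<bar> < \<epsilon> \<and> \<bar>(\<Sum>B\<in>R. h (tg B) * \<mu> B) - J\<bar> < \<epsilon>"
    by (rule R2[rule_format, OF R1 refines_refl]) (use tt in auto)
  then show ?thesis using R1 by auto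
qed

lemma abs2: "\<bar>(s::real) - I\<bar> < \<bar>I - J\<bar>/2 \<Longrightarrow> \<bar>s - J\<bar> < \<bar>I - J\<bar>/2 \<Longrightarrow> False"
  by (simp add: abs_real_def split: if_splits)

lemma baint_unique:
  assumes "has_baint \<mu> g I" "has_baint \<mu> g J" shows "I = J"
proof (rule ccontr)
  assume ne: "I \<noteq> J"
  define \<epsilon> where "\<epsilon> = \<bar>I - J\<bar> / 2"
  have e: "\<epsilon> > 0" using ne by (simp add: \<epsilon>_def)
  obtain R where "\<bar>(\<Sum>B\<in>R. g (tg B) * \<mu> B) - I\<bar> < \<epsilon> \<and> \<bar>(\<Sum>B\<in>R. g (tg B) * \<mu> B) - J\<bar> < \<epsilon>"
    using baint_two_tg[OF assms e] by blast
  then show False unfolding \<epsilon>_def using abs2 by blast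
qed

lemma baint_eq:
  assumes h: "has_baint \<mu> g I" shows "ba_integral \<mu> g = I"
proof -
  have e: "ba_integral \<mu> g = (THE I. has_baint \<mu> g I)"
    by (simp add: ba_integral_def has_baint_def)
  have "(THE I. has_baint \<mu> g I) = I"
    apply (rule the_equality)
     apply (rule h)
    apply (erule baint_unique[OF _ h])
    done
  then show ?thesis using e by simp
qed


lemma baint_add:
  assumes "has_baint \<mu> g I" "has_baint \<mu> h J"
  shows "has_baint \<mu> (\<lambda>x. g x + h x) (I + J)"
proof (rule has_baintI)
  fix \<epsilon> :: real assume e: "\<epsilon> > 0"
  obtain R where R1: "fin_partition R" and R2: "\<forall>Q t. fin_partition Q \<longrightarrow> refines Q R \<longrightarrow> (\<forall>B\<in>Q. t B \<in> B) \<longrightarrow>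
          \<bar>(\<Sum>B\<in>Q. g (t B) * \<mu> B) - I\<bar> < \<epsilon>/2 \<and> \<bar>(\<Sum>B\<in>Q. h (t B) * \<mu> B) - J\<bar> < \<epsilon>/2"
    using baint_two[OF assms, of "\<epsilon>/2"] e by auto
  show "\<exists>P. fin_partition P \<and> (\<forall>Q t. fin_partition Q \<longrightarrow> refines Q P \<longrightarrow> (\<forall>B\<in>Q. t B \<in> B) \<longrightarrow>
          \<bar>(\<Sum>B\<in>Q. (g (t B) + h (t B)) * \<mu> B) - (I + J)\<bar> < \<epsilon>)"
  proof (intro exI conjI allI impI)
    fix Q t assume Q: "fin_partition Q" "refines Q R" "\<forall>B\<in>Q. t B \<in> B"
    have "\<bar>(\<Sum>B\<in>Q. g (t B) * \<mu> B) - I\<bar> < \<epsilon>/2 \<and> \<bar>(\<Sum>B\<in>Q. h (t B) * \<mu> B) - J\<bar> < \<epsilon>/2"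
      by (rule R2[rule_format, OF Q(1) Q(2)]) (use Q(3) in auto)
    moreover have "(\<Sum>B\<in>Q. (g (t B) + h (t B)) * \<mu> B) = (\<Sum>B\<in>Q. g (t B) * \<mu> B) + (\<Sum>B\<in>Q. h (t B) * \<mu> B)"
      by (simp add: distrib_right sum.distrib)
    ultimately show "\<bar>(\<Sum>B\<in>Q. (g (t B) + h (t B)) * \<mu> B) - (I + J)\<bar> < \<epsilon>" by linarith
  qed (rule R1)
qed

lemma baint_scale:
  assumes "has_baint \<mu> g I"
  shows "has_baint \<mu> (\<lambda>x. c * g x) (c * I)"
proof (rule has_baintI)
  fix \<epsilon> :: real assume e: "\<epsilon> > 0"
  have e': "\<epsilon> / (\<bar>c\<bar> + 1) > 0" using e by simp
  obtain P where P1: "fin_partition P" and P2: "\<forall>Q t. fin_partition Q \<longrightarrow> refines Q P \<longrightarrow> (\<forall>B\<in>Q. t B \<in> B) \<longrightarrow>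
          \<bar>(\<Sum>B\<in>Q. g (t B) * \<mu> B) - I\<bar> < \<epsilon> / (\<bar>c\<bar> + 1)" using has_baintE[OF assms e'] by auto
  show "\<exists>P. fin_partition P \<and> (\<forall>Q t. fin_partition Q \<longrightarrow> refines Q P \<longrightarrow> (\<forall>B\<in>Q. t B \<in> B) \<longrightarrow>
          \<bar>(\<Sum>B\<in>Q. (c * g (t B)) * \<mu> B) - c * I\<bar> < \<epsilon>)"
  proof (intro exI conjI allI impI)
    fix Q t assume Q: "fin_partition Q" "refines Q P" "\<forall>B\<in>Q. t B \<in> B"
    have d: "\<bar>(\<Sum>B\<in>Q. g (t B) * \<mu> B) - I\<bar> < \<epsilon> / (\<bar>c\<bar> + 1)"
      by (rule P2[rule_format, OF Q(1) Q(2)]) (use Q(3) in auto)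
    have "(\<Sum>B\<in>Q. (c * g (t B)) * \<mu> B) - c * I = c * ((\<Sum>B\<in>Q. g (t B) * \<mu> B) - I)"
      by (simp add: sum_distrib_left algebra_simps)
    then have "\<bar>(\<Sum>B\<in>Q. (c * g (t B)) * \<mu> B) - c * I\<bar> = \<bar>c\<bar> * \<bar>(\<Sum>B\<in>Q. g (t B) * \<mu> B) - I\<bar>"
      by (simp add: abs_mult)
    also have "\<dots> \<le> \<bar>c\<bar> * (\<epsilon> / (\<bar>c\<bar> + 1))" using d by (intro mult_left_mono) auto
    also have "\<dots> < \<epsilon>" using e by (simp add: field_simps)
    finally show "\<bar>(\<Sum>B\<in>Q. (c * g (t B)) * \<mu> B) - c * I\<bar> < \<epsilon>" .
  qed (rule P1)
qed

definition pos_on :: "(('a \<times> 'a) set \<Rightarrow> real) \<Rightarrow> bool" where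
  "pos_on \<mu> \<longleftrightarrow> (\<forall>A. A \<subseteq> offdiag \<longrightarrow> \<mu> A \<ge> 0)"

definition ba_add :: "(('a \<times> 'a) set \<Rightarrow> real) \<Rightarrow> bool" where
  "ba_add \<mu> \<longleftrightarrow> (\<forall>A B. A \<subseteq> offdiag \<and> B \<subseteq> offdiag \<and> A \<inter> B = {} \<longrightarrow> \<mu> (A \<union> B) = \<mu> A + \<mu> B)"

lemma baint_mono:
  assumes "has_baint \<mu> g I" "has_baint \<mu> h J" "pos_on \<mu>" "\<And>x. x \<in> offdiag \<Longrightarrow> g x \<le> h x"
  shows "I \<le> J"
proof (rule ccontr)
  assume "\<not> I \<le> J"
  define \<epsilon> where "\<epsilon> = (I - J) / 2"
  have e: "\<epsilon> > 0" using \<open>\<not> I \<le> J\<close> by (simp add: \<epsilon>_def)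
  obtain R where R: "fin_partition R" and *: "\<bar>(\<Sum>B\<in>R. g (tg B) * \<mu> B) - I\<bar> < \<epsilon> \<and> \<bar>(\<Sum>B\<in>R. h (tg B) * \<mu> B) - J\<bar> < \<epsilon>"
    using baint_two_tg[OF assms(1,2) e] by auto
  have "(\<Sum>B\<in>R. g (tg B) * \<mu> B) \<le> (\<Sum>B\<in>R. h (tg B) * \<mu> B)"
  proof (rule sum_mono)
    fix B assume B: "B \<in> R"
    then have "B \<subseteq> offdiag" using R unfolding fin_partition_def by auto
    moreover have "tg B \<in> B" by (rule part_tg[OF R B])
    ultimately have x: "tg B \<in> offdiag" by auto
    have "\<mu> B \<ge> 0" using assms(3) \<open>B \<subseteq> offdiag\<close> unfolding pos_on_def by auto
    then show "g (tg B) * \<mu> B \<le> h (tg B) * \<mu> B"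
      using assms(4)[OF x] by (intro mult_right_mono) auto
  qed
  then show False using * unfolding \<epsilon>_def by (simp add: abs_real_def split: if_splits)
qed

lemma ba_empty: "ba_add \<mu> \<Longrightarrow> \<mu> {} = 0"
  unfolding ba_add_def by (drule spec[of _ "{}"], drule spec[of _ "{}"]) simp

lemma ba_finsum:
  assumes "ba_add \<mu>" "finite F" "disjoint F" "\<forall>B\<in>F. B \<subseteq> offdiag"
  shows "\<mu> (\<Union>F) = (\<Sum>B\<in>F. \<mu> B)"
  using assms(2,3,4)
proof (induction F rule: finite_induct)
  case empty then show ?case using ba_empty[OF assms(1)] by simp
next
  case (insert B F)
  have dF: "disjoint F" using insert.prems(1) by (auto simp: pairwise_insert)
  have "B \<inter> \<Union>F = {}"
  proof -
    have "disjnt B C" if "C \<in> F" for C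
      using insert.prems(1) insert.hyps(2) that unfolding pairwise_def by auto
    then show ?thesis unfolding disjnt_def by auto
  qed
  moreover have "B \<subseteq> offdiag" "\<Union>F \<subseteq> offdiag" using insert.prems(2) by auto
  ultimately have "\<mu> (B \<union> \<Union>F) = \<mu> B + \<mu> (\<Union>F)"
    using assms(1) unfolding ba_add_def by auto
  then show ?case using insert dF by simp
qed

lemma part_sum:
  assumes "ba_add \<mu>" "fin_partition Q" shows "(\<Sum>B\<in>Q. \<mu> B) = \<mu> offdiag"
proof -
  have "\<forall>B\<in>Q. B \<subseteq> offdiag" using assms(2) unfolding fin_partition_def by auto
  moreover have "finite Q" "disjoint Q" using assms(2) unfolding fin_partition_def by auto
  ultimately have "\<mu> (\<Union>Q) = (\<Sum>B\<in>Q. \<mu> B)"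
    using ba_finsum[OF assms(1)] by blast
  then show ?thesis using assms(2) unfolding fin_partition_def by auto
qed

lemma ba_addD: "ba_add \<mu> \<Longrightarrow> A \<subseteq> offdiag \<Longrightarrow> B \<subseteq> offdiag \<Longrightarrow> A \<inter> B = {} \<Longrightarrow> \<mu> (A \<union> B) = \<mu> A + \<mu> B"
  unfolding ba_add_def by blast

lemma pos_mono: "ba_add \<mu> \<Longrightarrow> pos_on \<mu> \<Longrightarrow> A \<subseteq> B \<Longrightarrow> B \<subseteq> offdiag \<Longrightarrow> \<mu> A \<le> \<mu> B"
proof -
  assume a: "ba_add \<mu>" "pos_on \<mu>" "A \<subseteq> B" "B \<subseteq> offdiag"
  have x: "A \<subseteq> offdiag" "B - A \<subseteq> offdiag" "A \<inter> (B - A) = {}" using a by auto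
  have "\<mu> (A \<union> (B - A)) = \<mu> A + \<mu> (B - A)" by (rule ba_addD[OF a(1) x])
  moreover have "A \<union> (B - A) = B" using a by auto
  moreover have "\<mu> (B - A) \<ge> 0" using a \<open>B - A \<subseteq> offdiag\<close> unfolding pos_on_def by auto
  ultimately show ?thesis by simp
qed

lemma baint_const:
  assumes "ba_add \<mu>" shows "has_baint \<mu> (\<lambda>x. c) (c * \<mu> offdiag)"
proof (rule has_baintI)
  fix \<epsilon> :: real assume e: "\<epsilon> > 0"
  have P: "fin_partition {C \<in> {offdiag}. C \<noteq> {}}"
    unfolding fin_partition_def by (auto simp: pairwise_def)
  have "(\<Sum>B\<in>Q. c * \<mu> B) = c * \<mu> offdiag" if "fin_partition Q" for Q
    using part_sum[OF assms that] by (simp add: sum_distrib_left[symmetric])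
  then show "\<exists>P. fin_partition P \<and> (\<forall>Q t. fin_partition Q \<longrightarrow> refines Q P \<longrightarrow> (\<forall>B\<in>Q. t B \<in> B) \<longrightarrow>
          \<bar>(\<Sum>B\<in>Q. c * \<mu> B) - c * \<mu> offdiag\<bar> < \<epsilon>)"
    using P e by auto
qed

lemma baint_ind:
  assumes "ba_add \<mu>" "A \<subseteq> offdiag" shows "has_baint \<mu> (indicator A) (\<mu> A)"
proof (rule has_baintI)
  fix \<epsilon> :: real assume e: "\<epsilon> > 0"
  define P where "P = {C \<in> {A, offdiag - A}. C \<noteq> {}}"
  have P: "fin_partition P"
    unfolding fin_partition_def P_def using assms(2) by (auto simp: pairwise_def disjnt_def)
  have "(\<Sum>B\<in>Q. indicator A (t B) * \<mu> B) = \<mu> A"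
    if Q: "fin_partition Q" "refines Q P" "\<forall>B\<in>Q. t B \<in> B" for Q t
  proof -
    have side: "B \<subseteq> A \<or> B \<subseteq> offdiag - A" if BQ: "B \<in> Q" for B
    proof -
      obtain C where "C \<in> P" "B \<subseteq> C" using Q(2) BQ unfolding refines_def by auto
      then show ?thesis unfolding P_def by auto
    qed
    have fin: "finite Q" using Q unfolding fin_partition_def by auto
    have "(\<Sum>B\<in>Q. indicator A (t B) * \<mu> B) = (\<Sum>B\<in>Q. if B \<subseteq> A then \<mu> B else 0)"
    proof (rule sum.cong[OF refl])
      fix B assume B: "B \<in> Q"
      then have tB: "t B \<in> B" using Q by auto
      show "indicator A (t B) * \<mu> B = (if B \<subseteq> A then \<mu> B else 0)"
      proof (cases "B \<subseteq> A")
        case True then show ?thesis using tB by (auto simp: indicator_def)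
      next
        case False then have "B \<subseteq> offdiag - A" using side[OF B] by auto
        then show ?thesis using tB False by (auto simp: indicator_def)
      qed
    qed
    also have "\<dots> = (\<Sum>B\<in>{B\<in>Q. B \<subseteq> A}. \<mu> B)"
      by (rule sum.inter_filter[OF fin, symmetric])
    also have "\<dots> = \<mu> (\<Union>{B\<in>Q. B \<subseteq> A})"
    proof (rule ba_finsum[OF assms(1), symmetric])
      show "finite {B \<in> Q. B \<subseteq> A}" using fin by auto
      show "disjoint {B \<in> Q. B \<subseteq> A}" using Q(1) unfolding fin_partition_def by (auto intro: pairwise_subset)
      show "\<forall>B\<in>{B \<in> Q. B \<subseteq> A}. B \<subseteq> offdiag" using assms(2) by auto
    qed
    also have "\<Union>{B\<in>Q. B \<subseteq> A} = A"
    proof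
      show "\<Union>{B\<in>Q. B \<subseteq> A} \<subseteq> A" by auto
      show "A \<subseteq> \<Union>{B\<in>Q. B \<subseteq> A}"
      proof
        fix a assume a: "a \<in> A"
        then have "a \<in> \<Union>Q" using assms(2) Q(1) unfolding fin_partition_def by auto
        then obtain B where B: "B \<in> Q" "a \<in> B" by auto
        then have "B \<subseteq> A" using side[OF B(1)] a by auto
        then show "a \<in> \<Union>{B\<in>Q. B \<subseteq> A}" using B by auto
      qed
    qed
    finally show ?thesis .
  qed
  then show "\<exists>P. fin_partition P \<and> (\<forall>Q t. fin_partition Q \<longrightarrow> refines Q P \<longrightarrow> (\<forall>B\<in>Q. t B \<in> B) \<longrightarrow>
          \<bar>(\<Sum>B\<in>Q. indicator A (t B) * \<mu> B) - \<mu> A\<bar> < \<epsilon>)"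
    using P e by auto
qed


definition bnd :: "('a \<times> 'a \<Rightarrow> real) \<Rightarrow> bool" where
  "bnd g \<longleftrightarrow> (\<exists>K. \<forall>x\<in>offdiag. \<bar>g x\<bar> \<le> K)"

definition lev :: "nat \<Rightarrow> ('a \<times> 'a \<Rightarrow> real) \<Rightarrow> ('a \<times> 'a) set set" where
  "lev n g = (\<lambda>k. {y\<in>offdiag. \<lfloor>real n * g y\<rfloor> = k}) ` ((\<lambda>x. \<lfloor>real n * g x\<rfloor>) ` offdiag)"

lemma lev_part:
  assumes "bnd g" shows "fin_partition (lev n g)"
  unfolding fin_partition_def
proof (intro conjI)
  obtain K where K: "\<forall>x\<in>offdiag. \<bar>g x\<bar> \<le> K" using assms unfolding bnd_def by auto
  have "(\<lambda>x. \<lfloor>real n * g x\<rfloor>) ` offdiag \<subseteq> {\<lfloor>- (real n * K)\<rfloor>..\<lfloor>real n * K\<rfloor>}"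
  proof
    fix k assume "k \<in> (\<lambda>x. \<lfloor>real n * g x\<rfloor>) ` offdiag"
    then obtain x where x: "x \<in> offdiag" "k = \<lfloor>real n * g x\<rfloor>" by auto
    have gx: "\<bar>g x\<bar> \<le> K" using K x(1) by auto
    have a: "real n * g x \<le> real n * K" using gx by (intro mult_left_mono) auto
    have b: "real n * (- K) \<le> real n * g x" using gx by (intro mult_left_mono) auto
    have "k \<le> \<lfloor>real n * K\<rfloor>" unfolding x(2) by (rule floor_mono[OF a])
    moreover have "\<lfloor>- (real n * K)\<rfloor> \<le> k" unfolding x(2) using floor_mono[OF b] by simp
    ultimately show "k \<in> {\<lfloor>- (real n * K)\<rfloor>..\<lfloor>real n * K\<rfloor>}" by simp
  qed
  then have "finite ((\<lambda>x. \<lfloor>real n * g x\<rfloor>) ` offdiag)" by (rule finite_subset) simp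
  then show "finite (lev n g)" unfolding lev_def by (rule finite_imageI)
  show "disjoint (lev n g)"
  proof (rule pairwiseI)
    fix X Y assume X: "X \<in> lev n g" and Y: "Y \<in> lev n g" and XY: "X \<noteq> Y"
    obtain k where k: "X = {y\<in>offdiag. \<lfloor>real n * g y\<rfloor> = k}" using X unfolding lev_def by blast
    obtain k' where k': "Y = {y\<in>offdiag. \<lfloor>real n * g y\<rfloor> = k'}" using Y unfolding lev_def by blast
    have "k \<noteq> k'" using XY k k' by auto
    then show "disjnt X Y" unfolding k k' disjnt_def by auto
  qed
  show "{} \<notin> lev n g"
  proof
    assume "{} \<in> lev n g"
    then obtain x where "x \<in> offdiag" "{} = {y\<in>offdiag. \<lfloor>real n * g y\<rfloor> = \<lfloor>real n * g x\<rfloor>}"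
      unfolding lev_def by auto
    then show False by (metis (mono_tags, lifting) empty_Collect_eq)
  qed
  show "\<Union> (lev n g) = offdiag"
  proof
    show "\<Union> (lev n g) \<subseteq> offdiag" unfolding lev_def by auto
    show "offdiag \<subseteq> \<Union> (lev n g)"
    proof
      fix x :: "'a \<times> 'a" assume x: "x \<in> offdiag"
      then have "{y\<in>offdiag. \<lfloor>real n * g y\<rfloor> = \<lfloor>real n * g x\<rfloor>} \<in> lev n g" unfolding lev_def by auto
      then show "x \<in> \<Union> (lev n g)" by (rule UnionI) (use x in simp)
    qed
  qed
qed

lemma lev_osc:
  assumes "n > 0" "C \<in> lev n g" "x \<in> C" "y \<in> C"
  shows "\<bar>g x - g y\<bar> \<le> 1 / real n"
proof -
  from assms(2) obtain k where C: "C = {y\<in>offdiag. \<lfloor>real n * g y\<rfloor> = k}" unfolding lev_def by auto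
  then have "\<lfloor>real n * g x\<rfloor> = \<lfloor>real n * g y\<rfloor>" using assms(3,4) by auto
  then have "\<bar>real n * g x - real n * g y\<bar> < 1" by linarith
  moreover have "real n * g x - real n * g y = real n * (g x - g y)" by (simp add: algebra_simps)
  ultimately have "real n * \<bar>g x - g y\<bar> < 1" by (simp add: abs_mult)
  then show ?thesis using assms(1) by (simp add: field_simps)
qed

lemma cell_unique:
  assumes "fin_partition P" "B \<noteq> {}" "C \<in> P" "C' \<in> P" "B \<subseteq> C" "B \<subseteq> C'"
  shows "C = C'"
proof (rule ccontr)
  assume "C \<noteq> C'"
  then have "disjnt C C'" using assms(1,3,4) unfolding fin_partition_def pairwise_def by auto
  then show False using assms(2,5,6) unfolding disjnt_def by auto
qed

lemma cell_sum:
  assumes "ba_add \<mu>" "fin_partition P" "fin_partition Q" "refines Q P" "C \<in> P"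
  shows "\<mu> C = (\<Sum>B\<in>{B\<in>Q. B \<subseteq> C}. \<mu> B)"
proof -
  have "\<Union>{B\<in>Q. B \<subseteq> C} = C"
  proof
    show "\<Union>{B\<in>Q. B \<subseteq> C} \<subseteq> C" by auto
    show "C \<subseteq> \<Union>{B\<in>Q. B \<subseteq> C}"
    proof
      fix c assume c: "c \<in> C"
      then have "c \<in> offdiag" using assms(2,5) unfolding fin_partition_def by auto
      then obtain B where B: "B \<in> Q" "c \<in> B" using assms(3) unfolding fin_partition_def by auto
      then obtain C' where C': "C' \<in> P" "B \<subseteq> C'" using assms(4) unfolding refines_def by auto
      have "C = C'" by (rule cell_unique[OF assms(2), of "{c}"]) (use c B C' assms(5) in auto)
      then show "c \<in> \<Union>{B\<in>Q. B \<subseteq> C}" using B C' by auto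
    qed
  qed
  moreover have "\<mu> (\<Union>{B\<in>Q. B \<subseteq> C}) = (\<Sum>B\<in>{B\<in>Q. B \<subseteq> C}. \<mu> B)"
  proof (rule ba_finsum[OF assms(1)])
    show "finite {B \<in> Q. B \<subseteq> C}" using assms(3) unfolding fin_partition_def by auto
    show "disjoint {B \<in> Q. B \<subseteq> C}" using assms(3) unfolding fin_partition_def by (auto intro: pairwise_subset)
    show "\<forall>B\<in>{B \<in> Q. B \<subseteq> C}. B \<subseteq> offdiag" using assms(2,5) unfolding fin_partition_def by auto
  qed
  ultimately show ?thesis by simp
qed

lemma regroup:
  assumes "ba_add \<mu>" "fin_partition P" "fin_partition Q" "refines Q P"
  shows "(\<Sum>C\<in>P. v C * \<mu> C) = (\<Sum>B\<in>Q. (\<Sum>C\<in>{C\<in>P. B \<subseteq> C}. v C) * \<mu> B)"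
proof -
  have fP: "finite P" and fQ: "finite Q" using assms(2,3) unfolding fin_partition_def by auto
  have "(\<Sum>C\<in>P. v C * \<mu> C) = (\<Sum>C\<in>P. v C * (\<Sum>B\<in>{B\<in>Q. B \<subseteq> C}. \<mu> B))"
    using cell_sum[OF assms] by simp
  also have "\<dots> = (\<Sum>C\<in>P. \<Sum>B\<in>{B\<in>Q. B \<subseteq> C}. v C * \<mu> B)"
    by (simp add: sum_distrib_left)
  also have "\<dots> = (\<Sum>B\<in>Q. \<Sum>C\<in>{C\<in>P. B \<subseteq> C}. v C * \<mu> B)"
    by (rule sum.swap_restrict[OF fP fQ])
  also have "\<dots> = (\<Sum>B\<in>Q. (\<Sum>C\<in>{C\<in>P. B \<subseteq> C}. v C) * \<mu> B)"
    by (simp add: sum_distrib_right)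
  finally show ?thesis .
qed

lemma estimate:
  assumes "ba_add \<mu>" "pos_on \<mu>" "fin_partition P" "fin_partition Q" "refines Q P"
    "\<forall>B\<in>Q. t B \<in> B" "\<forall>C\<in>P. \<forall>x\<in>C. \<bar>g x - v C\<bar> \<le> e"
  shows "\<bar>(\<Sum>B\<in>Q. g (t B) * \<mu> B) - (\<Sum>C\<in>P. v C * \<mu> C)\<bar> \<le> e * \<mu> offdiag"
proof -
  define w where "w B = (\<Sum>C\<in>{C\<in>P. B \<subseteq> C}. v C)" for B
  have w: "\<bar>g (t B) - w B\<bar> \<le> e" if B: "B \<in> Q" for B
  proof -
    obtain c where c: "c \<in> P" "B \<subseteq> c" using assms(5) B unfolding refines_def by auto
    have ne: "B \<noteq> {}" using assms(4) B unfolding fin_partition_def by auto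
    have "{C\<in>P. B \<subseteq> C} = {c}" using cell_unique[OF assms(3) ne] c by auto
    then have "w B = v c" unfolding w_def by simp
    moreover have "t B \<in> c" using assms(6) B c by auto
    ultimately show ?thesis using assms(7) c by auto
  qed
  have "(\<Sum>C\<in>P. v C * \<mu> C) = (\<Sum>B\<in>Q. w B * \<mu> B)" unfolding w_def by (rule regroup[OF assms(1,3,4,5)])
  then have "(\<Sum>B\<in>Q. g (t B) * \<mu> B) - (\<Sum>C\<in>P. v C * \<mu> C) = (\<Sum>B\<in>Q. (g (t B) - w B) * \<mu> B)"
    by (simp add: sum_subtractf left_diff_distrib)
  then have "\<bar>(\<Sum>B\<in>Q. g (t B) * \<mu> B) - (\<Sum>C\<in>P. v C * \<mu> C)\<bar> \<le> (\<Sum>B\<in>Q. \<bar>(g (t B) - w B) * \<mu> B\<bar>)"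
    by (simp add: sum_abs)
  also have "\<dots> \<le> (\<Sum>B\<in>Q. e * \<mu> B)"
  proof (rule sum_mono)
    fix B assume B: "B \<in> Q"
    then have "\<mu> B \<ge> 0" using assms(2,4) unfolding pos_on_def fin_partition_def by auto
    then show "\<bar>(g (t B) - w B) * \<mu> B\<bar> \<le> e * \<mu> B" using w[OF B] by (simp add: abs_mult mult_right_mono)
  qed
  also have "\<dots> = e * \<mu> offdiag" using part_sum[OF assms(1,4)] by (simp add: sum_distrib_left[symmetric])
  finally show ?thesis .
qed

lemma baint_exists:
  assumes mu: "ba_add \<mu>" "pos_on \<mu>" and g: "bnd g"
  shows "\<exists>I. has_baint \<mu> g I"
proof -
  define M where "M = \<mu> offdiag"
  have M0: "M \<ge> 0" using mu(2) unfolding pos_on_def M_def by auto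
  define s where "s n = (\<Sum>C\<in>lev n g. g (tg C) * \<mu> C)" for n
  have close: "\<bar>(\<Sum>B\<in>Q. g (t B) * \<mu> B) - s n\<bar> \<le> M / real n"
    if n: "n > 0" and Q: "fin_partition Q" "refines Q (lev n g)" "\<forall>B\<in>Q. t B \<in> B" for n Q t
  proof -
    have "\<forall>C\<in>lev n g. \<forall>x\<in>C. \<bar>g x - g (tg C)\<bar> \<le> 1 / real n"
      using lev_osc[OF n] part_tg[OF lev_part[OF g]] by blast
    from estimate[OF mu lev_part[OF g] Q this]
    show ?thesis unfolding s_def M_def by simp
  qed
  have cauchy: "\<bar>s n - s m\<bar> \<le> M / real n + M / real m" if "n > 0" "m > 0" for n m
  proof -
    let ?R = "meet (lev n g) (lev m g)"
    note R = meet_part[OF lev_part[OF g] lev_part[OF g]]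
    have tt: "\<forall>B\<in>?R. tg B \<in> B" using part_tg[OF R(1)] by auto
    have "\<bar>(\<Sum>B\<in>?R. g (tg B) * \<mu> B) - s n\<bar> \<le> M / real n" by (rule close[OF that(1) R(1) R(2) tt])
    moreover have "\<bar>(\<Sum>B\<in>?R. g (tg B) * \<mu> B) - s m\<bar> \<le> M / real m" by (rule close[OF that(2) R(1) R(3) tt])
    ultimately show ?thesis by (simp add: abs_real_def split: if_splits)
  qed
  define I where "I = (SUP k. s (Suc k) - M / real (Suc k))"
  have bdd: "bdd_above (range (\<lambda>k. s (Suc k) - M / real (Suc k)))"
  proof (rule bdd_aboveI2)
    fix k
    have "\<bar>s (Suc k) - s 1\<bar> \<le> M / real (Suc k) + M / real 1" by (rule cauchy) auto
    then show "s (Suc k) - M / real (Suc k) \<le> s 1 + M" by (simp add: abs_real_def split: if_splits)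
  qed
  have low: "s n - M / real n \<le> I" if n0: "n > 0" for n
  proof -
    obtain k where k: "n = Suc k" using n0 by (cases n) auto
    show ?thesis unfolding I_def k by (rule cSUP_upper[OF _ bdd]) simp
  qed
  have up: "I \<le> s n + M / real n" if "n > 0" for n
    unfolding I_def
  proof (rule cSUP_least)
    fix k
    have "\<bar>s (Suc k) - s n\<bar> \<le> M / real (Suc k) + M / real n" by (rule cauchy) (use that in auto)
    then show "s (Suc k) - M / real (Suc k) \<le> s n + M / real n" by (simp add: abs_real_def split: if_splits)
  qed simp
  have "has_baint \<mu> g I"
  proof (rule has_baintI)
    fix \<epsilon> :: real assume e: "\<epsilon> > 0"
    define n where "n = Suc (nat \<lceil>2 * M / \<epsilon>\<rceil>)"
    have n0: "n > 0" unfolding n_def by simp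
    have "2 * M / \<epsilon> < real n" unfolding n_def by linarith
    then have small: "2 * M / real n < \<epsilon>" using e n0 by (simp add: field_simps)
    show "\<exists>P. fin_partition P \<and> (\<forall>Q t. fin_partition Q \<longrightarrow> refines Q P \<longrightarrow> (\<forall>B\<in>Q. t B \<in> B) \<longrightarrow>
          \<bar>(\<Sum>B\<in>Q. g (t B) * \<mu> B) - I\<bar> < \<epsilon>)"
    proof (intro exI conjI allI impI)
      fix Q t assume Q: "fin_partition Q" "refines Q (lev n g)" "\<forall>B\<in>Q. t B \<in> B"
      have "\<bar>(\<Sum>B\<in>Q. g (t B) * \<mu> B) - s n\<bar> \<le> M / real n" by (rule close[OF n0 Q])
      moreover have "s n - M / real n \<le> I" "I \<le> s n + M / real n" using low[OF n0] up[OF n0] by auto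
      ultimately show "\<bar>(\<Sum>B\<in>Q. g (t B) * \<mu> B) - I\<bar> < \<epsilon>" using small
        by (simp add: abs_real_def split: if_splits)
    qed (rule lev_part[OF g])
  qed
  then show ?thesis by blast
qed


definition lingraph :: "('b \<Rightarrow> real) set \<Rightarrow> (('b \<Rightarrow> real) \<Rightarrow> real) \<Rightarrow> (('b \<Rightarrow> real) \<times> real) set \<Rightarrow> bool" where
  "lingraph V p G \<longleftrightarrow> (\<forall>a r b s. (a,r)\<in>G \<longrightarrow> (b,s)\<in>G \<longrightarrow> ((\<lambda>x. a x + b x), r + s) \<in> G) \<and>
                      (\<forall>a r c. (a,r)\<in>G \<longrightarrow> ((\<lambda>x. c * a x), c * r) \<in> G) \<and>
                      (\<forall>a r. (a,r)\<in>G \<longrightarrow> a \<in> V \<and> r \<le> p a)"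

lemma lingraphD:
  assumes "lingraph V p G"
  shows "\<And>a r b s. (a,r)\<in>G \<Longrightarrow> (b,s)\<in>G \<Longrightarrow> ((\<lambda>x. a x + b x), r + s) \<in> G"
    and "\<And>a r c. (a,r)\<in>G \<Longrightarrow> ((\<lambda>x. c * a x), c * r) \<in> G"
    and "\<And>a r. (a,r)\<in>G \<Longrightarrow> a \<in> V"
    and "\<And>a r. (a,r)\<in>G \<Longrightarrow> r \<le> p a"
  using assms unfolding lingraph_def by blast+

lemma lingraphI:
  assumes "\<And>a r b s. (a,r)\<in>G \<Longrightarrow> (b,s)\<in>G \<Longrightarrow> ((\<lambda>x. a x + b x), r + s) \<in> G"
    and "\<And>a r c. (a,r)\<in>G \<Longrightarrow> ((\<lambda>x. c * a x), c * r) \<in> G"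
    and "\<And>a r. (a,r)\<in>G \<Longrightarrow> a \<in> V \<and> r \<le> p a"
  shows "lingraph V p G"
  using assms unfolding lingraph_def by blast

lemma HB:
  fixes V :: "('b \<Rightarrow> real) set" and p :: "('b \<Rightarrow> real) \<Rightarrow> real"
  assumes Vadd: "\<And>a b. a\<in>V \<Longrightarrow> b\<in>V \<Longrightarrow> (\<lambda>x. a x + b x) \<in> V"
    and Vscale: "\<And>a c. a\<in>V \<Longrightarrow> (\<lambda>x. c * a x) \<in> V"
    and psub: "\<And>a b. a\<in>V \<Longrightarrow> b\<in>V \<Longrightarrow> p (\<lambda>x. a x + b x) \<le> p a + p b"
    and phom: "\<And>a c. a\<in>V \<Longrightarrow> c \<ge> 0 \<Longrightarrow> p (\<lambda>x. c * a x) = c * p a"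
    and G0: "lingraph V p G0" and G0ne: "G0 \<noteq> {}"
  shows "\<exists>\<psi>. (\<forall>a r. (a,r)\<in>G0 \<longrightarrow> \<psi> a = r) \<and> (\<forall>a\<in>V. \<psi> a \<le> p a) \<and>
             (\<forall>a\<in>V. \<forall>b\<in>V. \<psi> (\<lambda>x. a x + b x) = \<psi> a + \<psi> b) \<and> (\<forall>a\<in>V. \<forall>c. \<psi> (\<lambda>x. c * a x) = c * \<psi> a)"
proof -
  define A where "A = {G. lingraph V p G \<and> G0 \<subseteq> G}"
  have "\<forall>C\<in>chains A. \<exists>U\<in>A. \<forall>X\<in>C. X \<subseteq> U"
  proof
    fix C assume C: "C \<in> chains A"
    show "\<exists>U\<in>A. \<forall>X\<in>C. X \<subseteq> U"
    proof (cases "C = {}")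
      case True
      have "G0 \<in> A" using G0 unfolding A_def by auto
      then show ?thesis using True by auto
    next
      case False
      have CA: "C \<subseteq> A" using C by (rule chainsD2)
      have lin: "lingraph V p (\<Union>C)"
      proof (rule lingraphI)
        fix a r b s assume ar: "(a,r) \<in> \<Union>C" and bs: "(b,s) \<in> \<Union>C"
        then obtain G1 G2 where G1: "G1 \<in> C" "(a,r) \<in> G1" and G2: "G2 \<in> C" "(b,s) \<in> G2" by auto
        have "G1 \<subseteq> G2 \<or> G2 \<subseteq> G1" using chainsD[OF C G1(1) G2(1)] .
        then show "((\<lambda>x. a x + b x), r + s) \<in> \<Union>C"
        proof
          assume "G1 \<subseteq> G2"
          have l2: "lingraph V p G2" using CA G2(1) unfolding A_def by auto
          have "(a,r) \<in> G2" using \<open>G1 \<subseteq> G2\<close> G1(2) by auto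
          then have "((\<lambda>x. a x + b x), r + s) \<in> G2" by (rule lingraphD(1)[OF l2 _ G2(2)])
          then show ?thesis using G2 by auto
        next
          assume "G2 \<subseteq> G1"
          have l1: "lingraph V p G1" using CA G1(1) unfolding A_def by auto
          have "(b,s) \<in> G1" using \<open>G2 \<subseteq> G1\<close> G2(2) by auto
          then have "((\<lambda>x. a x + b x), r + s) \<in> G1" by (rule lingraphD(1)[OF l1 G1(2)])
          then show ?thesis using G1 by auto
        qed
      next
        fix a r c assume "(a,r) \<in> \<Union>C"
        then obtain G1 where G1: "G1 \<in> C" "(a,r) \<in> G1" by auto
        then have "((\<lambda>x. c * a x), c * r) \<in> G1" using lingraphD(2)[of V p G1] CA unfolding A_def by auto
        then show "((\<lambda>x. c * a x), c * r) \<in> \<Union>C" using G1 by auto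
      next
        fix a r assume "(a,r) \<in> \<Union>C"
        then obtain G1 where G1: "G1 \<in> C" "(a,r) \<in> G1" by auto
        then show "a \<in> V \<and> r \<le> p a" using lingraphD(3,4)[of V p G1] CA unfolding A_def by auto
      qed
      moreover have "G0 \<subseteq> \<Union>C"
      proof -
        obtain G1 where "G1 \<in> C" using False by auto
        then show ?thesis using CA unfolding A_def by auto
      qed
      ultimately have "\<Union>C \<in> A" unfolding A_def by auto
      then show ?thesis by auto
    qed
  qed
  from Zorn_Lemma2[OF this] obtain M where MA: "M \<in> A" and Mmax: "\<forall>X\<in>A. M \<subseteq> X \<longrightarrow> X = M" by blast
  have linM: "lingraph V p M" and G0M: "G0 \<subseteq> M" using MA unfolding A_def by auto
  note Madd = lingraphD(1)[OF linM] and Mscale = lingraphD(2)[OF linM]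
    and MV = lingraphD(3)[OF linM] and Mdom = lingraphD(4)[OF linM]
  obtain a0 r0 where a0: "(a0, r0) \<in> G0" using G0ne by auto
  have zeroM: "((\<lambda>x. 0), 0) \<in> M" using Mscale[of a0 r0 0] a0 G0M by auto
  have zeroV: "(\<lambda>x. 0) \<in> V" using MV[OF zeroM] .
  have p0: "p (\<lambda>x. 0) = 0" using phom[OF zeroV, of 0] by simp
  have func: "r = s" if "(a,r) \<in> M" "(a,s) \<in> M" for a r s
  proof -
    have neg: "(\<lambda>x. a x + (- 1) * a x) = (\<lambda>x. 0)" by auto
    have "r + (-1) * s \<le> 0"
      using Mdom[OF Madd[OF that(1) Mscale[OF that(2), of "-1"]]] neg p0 by simp
    moreover have "s + (-1) * r \<le> 0"
      using Mdom[OF Madd[OF that(2) Mscale[OF that(1), of "-1"]]] neg p0 by simp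
    ultimately show ?thesis by simp
  qed
  have total: "\<exists>r. (g0, r) \<in> M" if g0: "g0 \<in> V" for g0
  proof (rule ccontr)
    assume nog: "\<not> (\<exists>r. (g0, r) \<in> M)"
    define mg where "mg = (\<lambda>x. (- 1) * g0 x)"
    have mgV: "mg \<in> V" unfolding mg_def by (rule Vscale[OF g0])
    define L where "L = {s - p (\<lambda>x. b x + mg x) | b s. (b,s) \<in> M}"
    define c where "c = Sup L"
    have key: "s - p (\<lambda>x. b x + mg x) \<le> p (\<lambda>x. b' x + g0 x) - s'" if "(b,s) \<in> M" "(b',s') \<in> M" for b s b' s'
    proof -
      have "s + s' \<le> p (\<lambda>x. b x + b' x)" using Mdom[OF Madd[OF that]] .
      also have "(\<lambda>x. b x + b' x) = (\<lambda>x. (\<lambda>x. b x + mg x) x + (\<lambda>x. b' x + g0 x) x)"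
        unfolding mg_def by auto
      also have "p \<dots> \<le> p (\<lambda>x. b x + mg x) + p (\<lambda>x. b' x + g0 x)"
        by (rule psub) (use Vadd MV that mgV g0 in auto)
      finally show ?thesis by simp
    qed
    have Lne: "L \<noteq> {}" unfolding L_def using zeroM by auto
    have Lbdd: "bdd_above L"
      unfolding bdd_above_def L_def using key[OF _ zeroM] by blast
    have cl: "s - p (\<lambda>x. b x + mg x) \<le> c" if "(b,s) \<in> M" for b s
      unfolding c_def by (rule cSup_upper[OF _ Lbdd]) (use that in \<open>auto simp: L_def\<close>)
    have cu: "c \<le> p (\<lambda>x. b' x + g0 x) - s'" if "(b',s') \<in> M" for b' s'
      unfolding c_def by (rule cSup_least[OF Lne]) (use key that in \<open>auto simp: L_def\<close>)
    define G' where "G' = {(\<lambda>x. a x + t * g0 x, r + t * c) | a r t. (a, r) \<in> M}"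
    have memG': "(X, Y) \<in> G'" if "(a,r) \<in> M" "X = (\<lambda>x. a x + t * g0 x)" "Y = r + t * c" for X Y a r t
      unfolding G'_def using that by blast
    have linG': "lingraph V p G'"
    proof (rule lingraphI)
      fix X Y X' Y' assume "(X,Y) \<in> G'" "(X',Y') \<in> G'"
      then obtain a r t a' r' t' where A1: "(a,r)\<in>M" "X = (\<lambda>x. a x + t * g0 x)" "Y = r + t * c"
        and A2: "(a',r')\<in>M" "X' = (\<lambda>x. a' x + t' * g0 x)" "Y' = r' + t' * c"
        unfolding G'_def by blast
      show "((\<lambda>x. X x + X' x), Y + Y') \<in> G'"
        by (rule memG'[OF Madd[OF A1(1) A2(1)], of _ "t + t'"]) (auto simp: A1 A2 algebra_simps)
    next
      fix X Y k assume "(X,Y) \<in> G'"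
      then obtain a r t where A1: "(a,r)\<in>M" "X = (\<lambda>x. a x + t * g0 x)" "Y = r + t * c"
        unfolding G'_def by blast
      show "((\<lambda>x. k * X x), k * Y) \<in> G'"
        by (rule memG'[OF Mscale[OF A1(1), of k], of _ "k * t"]) (auto simp: A1 algebra_simps)
    next
      fix X Y assume "(X,Y) \<in> G'"
      then obtain a r t where A1: "(a,r)\<in>M" "X = (\<lambda>x. a x + t * g0 x)" "Y = r + t * c"
        unfolding G'_def by blast
      have aV: "a \<in> V" by (rule MV[OF A1(1)])
      have XV: "X \<in> V" unfolding A1(2) by (rule Vadd[OF aV Vscale[OF g0]])
      have "r + t * c \<le> p (\<lambda>x. a x + t * g0 x)"
      proof (cases "t = 0")
        case True then show ?thesis using Mdom[OF A1(1)] by simp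
      next
        case False
        show ?thesis
        proof (cases "t > 0")
          case True
          have m: "((\<lambda>x. (1/t) * a x), (1/t) * r) \<in> M" by (rule Mscale[OF A1(1)])
          have "c \<le> p (\<lambda>x. (1/t) * a x + g0 x) - (1/t) * r" by (rule cu[OF m])
          then have "t * c + r \<le> t * p (\<lambda>x. (1/t) * a x + g0 x)" using True by (simp add: field_simps)
          also have "\<dots> = p (\<lambda>x. t * ((1/t) * a x + g0 x))"
          proof -
            have inV: "(\<lambda>x. (1/t) * a x + g0 x) \<in> V" by (rule Vadd[OF Vscale[OF aV] g0])
            show ?thesis using phom[OF inV, of t] True by simp
          qed
          also have "(\<lambda>x. t * ((1/t) * a x + g0 x)) = (\<lambda>x. a x + t * g0 x)"
            using True by (auto simp: field_simps)
          finally show ?thesis by simp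
        next
          case False
          then have tn: "- t > 0" using \<open>t \<noteq> 0\<close> by simp
          have m: "((\<lambda>x. (1/(-t)) * a x), (1/(-t)) * r) \<in> M" by (rule Mscale[OF A1(1)])
          have "(1/(-t)) * r - p (\<lambda>x. (1/(-t)) * a x + mg x) \<le> c" by (rule cl[OF m])
          then have "r + t * c \<le> (- t) * p (\<lambda>x. (1/(-t)) * a x + mg x)" using tn by (simp add: field_simps)
          also have "\<dots> = p (\<lambda>x. (- t) * ((1/(-t)) * a x + mg x))"
          proof -
            have inV: "(\<lambda>x. (1/(-t)) * a x + mg x) \<in> V" by (rule Vadd[OF Vscale[OF aV] mgV])
            show ?thesis using phom[OF inV, of "-t"] tn by simp
          qed
          also have "(\<lambda>x. (- t) * ((1/(-t)) * a x + mg x)) = (\<lambda>x. a x + t * g0 x)"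
            using tn unfolding mg_def by (auto simp: field_simps)
          finally show ?thesis .
        qed
      qed
      then show "X \<in> V \<and> Y \<le> p X" using XV A1 by simp
    qed
    have MG': "M \<subseteq> G'"
    proof
      fix z assume "z \<in> M"
      then obtain a r where z: "z = (a, r)" "(a,r) \<in> M" by (cases z) auto
      show "z \<in> G'" unfolding z(1) by (rule memG'[OF z(2), of _ 0]) auto
    qed
    have "G' \<in> A" using linG' MG' G0M unfolding A_def by auto
    then have "G' = M" using Mmax MG' by auto
    moreover have "(g0, c) \<in> G'" by (rule memG'[OF zeroM, of _ 1]) auto
    ultimately show False using nog by auto
  qed
  define \<psi> where "\<psi> g = (SOME r. (g, r) \<in> M)" for g
  have psiM: "(g, \<psi> g) \<in> M" if "g \<in> V" for g
    unfolding \<psi>_def using total[OF that] by (rule someI_ex)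
  show ?thesis
  proof (intro exI conjI ballI allI impI)
    fix a r assume "(a, r) \<in> G0"
    then have ar: "(a,r) \<in> M" using G0M by auto
    show "\<psi> a = r" by (rule func[OF psiM[OF MV[OF ar]] ar])
  next
    fix a assume "a \<in> V"
    show "\<psi> a \<le> p a" by (rule Mdom[OF psiM[OF \<open>a \<in> V\<close>]])
  next
    fix a b assume ab: "a \<in> V" "b \<in> V"
    show "\<psi> (\<lambda>x. a x + b x) = \<psi> a + \<psi> b"
      by (rule func[OF psiM[OF Vadd[OF ab]] Madd[OF psiM[OF ab(1)] psiM[OF ab(2)]]])
  next
    fix a c assume a: "a \<in> V"
    show "\<psi> (\<lambda>x. c * a x) = c * \<psi> a"
      by (rule func[OF psiM[OF Vscale[OF a]] Mscale[OF psiM[OF a]]])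
  qed
qed


lemma Lip0_lip: "f \<in> Lip0 z \<Longrightarrow> \<exists>C. lipschitz_on C UNIV f"
  by (simp add: Lip0_def)

lemma Lip0_add: "f \<in> Lip0 z \<Longrightarrow> g \<in> Lip0 z \<Longrightarrow> (\<lambda>x. f x + g x) \<in> Lip0 z"
  unfolding Lip0_def using lipschitz_on_add[of _ UNIV f _ g] by auto

lemma Lip0_scale: "f \<in> Lip0 z \<Longrightarrow> (\<lambda>x. c * f x) \<in> Lip0 z"
  unfolding Lip0_def using lipschitz_on_cmult_real[of _ UNIV f c] by auto

lemma Lip0_zero: "(\<lambda>x. 0) \<in> Lip0 z"
  unfolding Lip0_def using lipschitz_on_constant[of UNIV 0] by auto

lemma de_leeuw_pair: "de_leeuw f (x, y) = (f x - f y) / dist x y"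
  by (simp add: de_leeuw_def)

lemma de_leeuw_add: "de_leeuw (\<lambda>x. f x + g x) = (\<lambda>p. de_leeuw f p + de_leeuw g p)"
proof (rule ext)
  fix p :: "'a \<times> 'a" show "de_leeuw (\<lambda>x. f x + g x) p = de_leeuw f p + de_leeuw g p"
    by (cases p) (simp add: de_leeuw_pair add_divide_distrib[symmetric] algebra_simps)
qed

lemma de_leeuw_scale: "de_leeuw (\<lambda>x. c * f x) = (\<lambda>p. c * de_leeuw f p)"
proof (rule ext)
  fix p :: "'a \<times> 'a" show "de_leeuw (\<lambda>x. c * f x) p = c * de_leeuw f p"
    by (cases p) (simp add: de_leeuw_pair algebra_simps)
qed

lemma de_leeuw_bnd: "\<exists>C. lipschitz_on C UNIV f \<Longrightarrow> bnd (de_leeuw f)"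
  unfolding bnd_def using de_leeuw_bound by blast

lemma ball_lip1: assumes "f \<in> lip0_ball z" shows "lipschitz_on 1 UNIV f"
proof -
  have "f \<in> Lip0 z" "lipnorm f \<le> 1" using assms unfolding lip0_ball_def by auto
  then show ?thesis using lipnorm_lip[OF Lip0_lip] lipschitz_on_mono[of "lipnorm f" UNIV f UNIV 1] by auto
qed

lemma ball_bound: "f \<in> lip0_ball z \<Longrightarrow> \<bar>f x - f y\<bar> \<le> dist x y"
  using ball_lip1 unfolding lipschitz_on_def by (fastforce simp: dist_real_def)

lemma ball_Lip0: "f \<in> lip0_ball z \<Longrightarrow> f \<in> Lip0 z"
  unfolding lip0_ball_def by auto

lemma lip1_ball: "lipschitz_on 1 UNIV f \<Longrightarrow> f z = 0 \<Longrightarrow> f \<in> lip0_ball z"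
  unfolding lip0_ball_def Lip0_def using lipnorm_le by auto

lemma ball_neg: assumes "f \<in> lip0_ball z" shows "(\<lambda>x. (-1) * f x) \<in> lip0_ball z"
proof -
  have "lipschitz_on (\<bar>-1\<bar> * 1) UNIV (\<lambda>x. (-1) * f x)"
    by (rule lipschitz_on_cmult_real[OF ball_lip1[OF assms]])
  then have l: "lipschitz_on 1 UNIV (\<lambda>x. (-1) * f x)" by simp
  have "f z = 0" using assms unfolding lip0_ball_def Lip0_def by auto
  then show ?thesis by (intro lip1_ball[OF l]) simp
qed

lemma ball_zero: "(\<lambda>x. 0) \<in> lip0_ball z"
  by (rule lip1_ball) (auto simp: lipschitz_on_def)

lemma ball_diff_le2:
  assumes "f \<in> lip0_ball z" "g \<in> lip0_ball z" shows "lipnorm (\<lambda>x. f x - g x) \<le> 2"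
proof (rule lipnorm_le, rule lipschitz_onI1)
  fix a b
  have "\<bar>f a - g a - (f b - g b)\<bar> \<le> \<bar>f a - f b\<bar> + \<bar>g a - g b\<bar>" by linarith
  also have "\<dots> \<le> 2 * dist a b" using ball_bound[OF assms(1), of a b] ball_bound[OF assms(2), of a b] by linarith
  finally show "\<bar>f a - g a - (f b - g b)\<bar> \<le> 2 * dist a b" .
qed simp

lemma dual_scale: "lip0_dual z \<phi> \<Longrightarrow> f \<in> Lip0 z \<Longrightarrow> \<phi> (\<lambda>x. c * f x) = c * \<phi> f"
  unfolding lip0_dual_def by blast

lemma dual_add: "lip0_dual z \<phi> \<Longrightarrow> f \<in> Lip0 z \<Longrightarrow> g \<in> Lip0 z \<Longrightarrow> \<phi> (\<lambda>x. f x + g x) = \<phi> f + \<phi> g"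
  unfolding lip0_dual_def by blast

lemma dual_bdd:
  assumes "lip0_dual z \<phi>" shows "bdd_above ((\<lambda>f. \<bar>\<phi> f\<bar>) ` lip0_ball z)"
proof -
  obtain C where C: "\<forall>f\<in>Lip0 z. \<bar>\<phi> f\<bar> \<le> C * lipnorm f" using assms unfolding lip0_dual_def by blast
  have "\<bar>\<phi> f\<bar> \<le> \<bar>C\<bar>" if f: "f \<in> lip0_ball z" for f
  proof -
    have l: "0 \<le> lipnorm f" "lipnorm f \<le> 1" using f lipnorm_nonneg[OF Lip0_lip] unfolding lip0_ball_def by auto
    have "C * lipnorm f \<le> \<bar>C\<bar> * lipnorm f" using l by (intro mult_right_mono) auto
    also have "\<dots> \<le> \<bar>C\<bar>" using l by (simp add: mult_left_le)
    finally show ?thesis using C f unfolding lip0_ball_def by force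
  qed
  then show ?thesis by (intro bdd_aboveI2) auto
qed

lemma dual_bound:
  assumes d: "lip0_dual z \<phi>" "dual_norm z \<phi> = 1" and f: "f \<in> Lip0 z"
  shows "\<bar>\<phi> f\<bar> \<le> lipnorm f"
proof (rule field_le_epsilon)
  fix e :: real assume e: "e > 0"
  define L where "L = lipnorm f + e"
  have L0: "L > 0" using lipnorm_nonneg[OF Lip0_lip[OF f]] e unfolding L_def by simp
  define h where "h = (\<lambda>x. (1/L) * f x)"
  have hL: "h \<in> Lip0 z" unfolding h_def by (rule Lip0_scale[OF f])
  have "lipschitz_on ((1/L) * lipnorm f) UNIV h"
  proof -
    have "0 \<le> 1/L" using L0 by simp
    then show ?thesis unfolding h_def by (rule lipschitz_on_cmult_real_nonneg[OF lipnorm_lip[OF Lip0_lip[OF f]]])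
  qed
  then have "lipnorm h \<le> (1/L) * lipnorm f" by (rule lipnorm_le)
  also have "\<dots> \<le> 1" using L0 e unfolding L_def by (simp add: field_simps)
  finally have "h \<in> lip0_ball z" using hL unfolding lip0_ball_def by auto
  then have "\<bar>\<phi> h\<bar> \<le> dual_norm z \<phi>" unfolding dual_norm_def by (rule cSUP_upper[OF _ dual_bdd[OF d(1)]])
  moreover have "\<phi> h = (1/L) * \<phi> f" unfolding h_def by (rule dual_scale[OF d(1) f])
  ultimately have "\<bar>\<phi> f\<bar> / L \<le> 1" using d(2) L0 by (simp add: abs_mult)
  then show "\<bar>\<phi> f\<bar> \<le> lipnorm f + e" using L0 unfolding L_def by (simp add: field_simps)
qed

lemma ba_norm_pos:
  assumes add: "ba_add \<mu>" and pos: "pos_on \<mu>"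
  shows "ba_norm \<mu> = \<mu> offdiag"
proof -
  let ?PP = "{P. finite P \<and> disjoint P \<and> (\<forall>A\<in>P. A \<subseteq> offdiag)}"
  have each: "(\<Sum>A\<in>P. \<bar>\<mu> A\<bar>) \<le> \<mu> offdiag" if P: "P \<in> ?PP" for P
  proof -
    have "(\<Sum>A\<in>P. \<bar>\<mu> A\<bar>) = (\<Sum>A\<in>P. \<mu> A)" using P pos unfolding pos_on_def by (intro sum.cong) auto
    also have "\<dots> = \<mu> (\<Union>P)" using ba_finsum[OF add] P by auto
    also have "\<dots> \<le> \<mu> offdiag" by (rule pos_mono[OF add pos]) (use P in auto)
    finally show ?thesis .
  qed
  have od: "{offdiag} \<in> ?PP" by (auto simp: pairwise_def)
  have "ba_norm \<mu> \<le> \<mu> offdiag" unfolding ba_norm_def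
  proof (rule cSUP_least)
    show "?PP \<noteq> {}" using od by blast
    fix P :: "('a \<times> 'a) set set" assume "P \<in> ?PP" then show "(\<Sum>A\<in>P. \<bar>\<mu> A\<bar>) \<le> \<mu> offdiag" by (rule each)
  qed
  moreover have "\<bar>\<mu> offdiag\<bar> \<le> ba_norm \<mu>"
  proof -
    have bdd: "bdd_above ((\<lambda>P. \<Sum>A\<in>P. \<bar>\<mu> A\<bar>) ` ?PP)"
      by (rule bdd_aboveI2[of _ _ "\<mu> offdiag"]) (rule each)
    show ?thesis unfolding ba_norm_def using cSUP_upper[OF od bdd] by simp
  qed
  ultimately show ?thesis by simp
qed


lemma hb_exists:
  assumes "ba_add \<mu>" "pos_on \<mu>" "\<exists>C. lipschitz_on C UNIV f"
  shows "has_baint \<mu> (de_leeuw f) (Phi_star \<mu> f)"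
proof -
  obtain I where I: "has_baint \<mu> (de_leeuw f) I" using baint_exists[OF assms(1,2) de_leeuw_bnd[OF assms(3)]] by blast
  then have "Phi_star \<mu> f = I" unfolding Phi_star_def by (rule baint_eq)
  then show ?thesis using I by simp
qed

lemma dir1:
  fixes z :: "'a::metric_space" and \<mu> :: "('a \<times> 'a) set \<Rightarrow> real"
  assumes ld: "LD2P z" and mu: "ba_measure \<mu>" "optimal z \<mu>" "ba_norm \<mu> = 1" and g: "0 < \<gamma>" "\<gamma> < 1"
  shows "\<exists>A u v. A \<subseteq> (offdiag :: ('a \<times> 'a) set) \<and> u \<noteq> v \<and> \<mu> A \<ge> \<gamma> \<and>
           cyc_mono \<gamma> (A \<union> {(u, v)}) \<and> cyc_mono \<gamma> (A \<union> {(v, u)})"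
proof -
  have add: "ba_add \<mu>" using mu(1) unfolding ba_measure_def ba_add_def by blast
  have pos: "pos_on \<mu>" using mu(2) unfolding optimal_def pos_on_def by blast
  have M1: "\<mu> offdiag = 1" using ba_norm_pos[OF add pos] mu(3) by simp
  define \<phi> where "\<phi> = Phi_star \<mu>"
  have hb: "has_baint \<mu> (de_leeuw f) (\<phi> f)" if "f \<in> Lip0 z" for f
    unfolding \<phi>_def by (rule hb_exists[OF add pos Lip0_lip[OF that]])
  have dual: "lip0_dual z \<phi>"
    unfolding lip0_dual_def
  proof (intro conjI ballI allI)
    fix f g assume f: "f \<in> Lip0 z" and gg: "g \<in> Lip0 z"
    have "has_baint \<mu> (de_leeuw (\<lambda>x. f x + g x)) (\<phi> f + \<phi> g)"
      unfolding de_leeuw_add by (rule baint_add[OF hb[OF f] hb[OF gg]])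
    then show "\<phi> (\<lambda>x. f x + g x) = \<phi> f + \<phi> g"
      using baint_unique[OF hb[OF Lip0_add[OF f gg]]] by blast
  next
    fix c f assume f: "f \<in> Lip0 z"
    have "has_baint \<mu> (de_leeuw (\<lambda>x. c * f x)) (c * \<phi> f)"
      unfolding de_leeuw_scale by (rule baint_scale[OF hb[OF f]])
    then show "\<phi> (\<lambda>x. c * f x) = c * \<phi> f"
      using baint_unique[OF hb[OF Lip0_scale[OF f]]] by blast
  next
    show "\<exists>C. \<forall>f\<in>Lip0 z. \<bar>\<phi> f\<bar> \<le> C * lipnorm f"
    proof (intro exI ballI)
      fix f assume f: "f \<in> Lip0 z"
      have b: "\<bar>de_leeuw f p\<bar> \<le> lipnorm f" for p by (rule de_leeuw_bound[OF Lip0_lip[OF f]])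
      have "\<phi> f \<le> lipnorm f * \<mu> offdiag"
        by (rule baint_mono[OF hb[OF f] baint_const[OF add] pos]) (use b in \<open>auto simp: abs_le_iff\<close>)
      moreover have "(- lipnorm f) * \<mu> offdiag \<le> \<phi> f"
        by (rule baint_mono[OF baint_const[OF add] hb[OF f] pos]) (use b in \<open>auto simp: abs_le_iff minus_le_iff\<close>)
      ultimately show "\<bar>\<phi> f\<bar> \<le> 1 * lipnorm f" using M1 by simp
    qed
  qed
  have dn: "dual_norm z \<phi> = 1" using mu(2,3) unfolding optimal_def \<phi>_def by simp
  define \<alpha> where "\<alpha> = (1 - \<gamma>)^2 / 2"
  have a0: "\<alpha> > 0" using g unfolding \<alpha>_def by simp
  have diam: "lip0_diam (slice z \<phi> \<alpha>) = 2" using ld dual dn a0 unfolding LD2P_def by blast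
  have bddb: "bdd_above ((\<lambda>f. \<bar>\<phi> f\<bar>) ` lip0_ball z)" by (rule dual_bdd[OF dual])
  have "1 - \<alpha> < (SUP f\<in>lip0_ball z. \<bar>\<phi> f\<bar>)" using dn a0 unfolding dual_norm_def by simp
  then obtain f0 where f0: "f0 \<in> lip0_ball z" "1 - \<alpha> < \<bar>\<phi> f0\<bar>"
    using less_cSUP_iff[OF _ bddb] ball_zero by blast
  have sne: "slice z \<phi> \<alpha> \<noteq> {}"
  proof (cases "\<phi> f0 \<ge> 0")
    case True then have "f0 \<in> slice z \<phi> \<alpha>" using f0 unfolding slice_def by auto
    then show ?thesis by auto
  next
    case False
    have "\<phi> (\<lambda>x. (-1) * f0 x) = (-1) * \<phi> f0" by (rule dual_scale[OF dual ball_Lip0[OF f0(1)]])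
    then have "(\<lambda>x. (-1) * f0 x) \<in> slice z \<phi> \<alpha>" using f0 False ball_neg[OF f0(1)] unfolding slice_def by auto
    then show ?thesis by auto
  qed
  let ?SS = "slice z \<phi> \<alpha> \<times> slice z \<phi> \<alpha>"
  let ?F = "\<lambda>p. lipnorm (\<lambda>x. fst p x - snd p x)"
  have bddS: "bdd_above (?F ` ?SS)"
    by (rule bdd_aboveI2[of _ _ 2]) (auto simp: slice_def intro: ball_diff_le2)
  have "1 + \<gamma> < (SUP p\<in>?SS. ?F p)" using diam g unfolding lip0_diam_def by simp
  then obtain f h where fh: "f \<in> slice z \<phi> \<alpha>" "h \<in> slice z \<phi> \<alpha>" "1 + \<gamma> < lipnorm (\<lambda>x. f x - h x)"
    using less_cSUP_iff[OF _ bddS] sne by force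
  have fb: "f \<in> lip0_ball z" "h \<in> lip0_ball z" using fh unfolding slice_def by auto
  have fphi: "\<phi> f > 1 - \<alpha>" "\<phi> h > 1 - \<alpha>" using fh unfolding slice_def by auto
  obtain u v where uv: "(1 + \<gamma>) * dist u v < \<bar>(f u - h u) - (f v - h v)\<bar>"
  proof (rule ccontr)
    assume "\<not> thesis"
    then have "\<forall>u v. \<bar>(f u - h u) - (f v - h v)\<bar> \<le> (1 + \<gamma>) * dist u v" using that by (meson not_le)
    then have "lipschitz_on (1 + \<gamma>) UNIV (\<lambda>x. f x - h x)" using g by (intro lipschitz_onI1) auto
    then have "lipnorm (\<lambda>x. f x - h x) \<le> 1 + \<gamma>" by (rule lipnorm_le)
    then show False using fh(3) by simp
  qed
  obtain u' v' where uv': "(1 + \<gamma>) * dist u' v' < (f u' - f v') - (h u' - h v')"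
  proof (cases "(f u - h u) - (f v - h v) \<ge> 0")
    case True then show ?thesis using uv that[of u v] by auto
  next
    case False then show ?thesis using uv that[of v u] by (auto simp: dist_commute)
  qed
  have uvne: "u' \<noteq> v'" using uv' by auto
  have fu: "f u' - f v' \<le> dist u' v'" "h v' - h u' \<le> dist u' v'"
    using ball_bound[OF fb(1), of u' v'] ball_bound[OF fb(2), of v' u'] by (auto simp: dist_commute)
  have fuv: "f u' - f v' > \<gamma> * dist u' v'" "h v' - h u' > \<gamma> * dist u' v'"
    using uv' fu by (auto simp: algebra_simps)
  have badset: "\<mu> {p\<in>offdiag. de_leeuw k p < \<gamma>} < (1 - \<gamma>) / 2"
    if k: "k \<in> lip0_ball z" "\<phi> k > 1 - \<alpha>" for k
  proof -
    let ?B = "{p\<in>offdiag. de_leeuw k p < \<gamma>}"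
    have kL: "k \<in> Lip0 z" using k(1) by (rule ball_Lip0)
    have B: "?B \<subseteq> offdiag" by auto
    have int: "has_baint \<mu> (\<lambda>p. 1 + (- (1 - \<gamma>)) * indicator ?B p) (1 * \<mu> offdiag + (- (1 - \<gamma>)) * \<mu> ?B)"
      by (rule baint_add[OF baint_const[OF add] baint_scale[OF baint_ind[OF add B]]])
    have kb: "\<bar>de_leeuw k p\<bar> \<le> 1" for p
      using de_leeuw_bound[OF Lip0_lip[OF kL], of p] k unfolding lip0_ball_def by auto
    have "\<phi> k \<le> 1 * \<mu> offdiag + (- (1 - \<gamma>)) * \<mu> ?B"
    proof (rule baint_mono[OF hb[OF kL] int pos])
      fix p :: "'a \<times> 'a" assume "p \<in> offdiag"
      show "de_leeuw k p \<le> 1 + (- (1 - \<gamma>)) * indicator ?B p"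
        using kb[of p] \<open>p \<in> offdiag\<close> by (cases "de_leeuw k p < \<gamma>") (auto simp: indicator_def)
    qed
    moreover have "1 * \<mu> offdiag + (- (1 - \<gamma>)) * \<mu> ?B = 1 - (1 - \<gamma>) * \<mu> ?B"
      using M1 by (simp add: algebra_simps)
    ultimately have "(1 - \<gamma>) * \<mu> ?B < \<alpha>" using k(2) by linarith
    then have "(1 - \<gamma>) * \<mu> ?B < (1 - \<gamma>) * ((1 - \<gamma>) / 2)" unfolding \<alpha>_def by (simp add: power2_eq_square)
    then show ?thesis using g by simp
  qed
  define B1 where "B1 = {p\<in>offdiag. de_leeuw f p < \<gamma>}"
  define B2 where "B2 = {p\<in>offdiag. de_leeuw h p < \<gamma>}"
  define A where "A = offdiag - (B1 \<union> B2)"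
  have mB1: "\<mu> B1 < (1 - \<gamma>) / 2" unfolding B1_def by (rule badset[OF fb(1) fphi(1)])
  have mB2: "\<mu> B2 < (1 - \<gamma>) / 2" unfolding B2_def by (rule badset[OF fb(2) fphi(2)])
  have Bs: "B1 \<subseteq> offdiag" "B2 \<subseteq> offdiag" "A \<subseteq> offdiag" unfolding B1_def B2_def A_def by auto
  have "\<mu> (A \<union> (B1 \<union> B2)) = \<mu> A + \<mu> (B1 \<union> B2)"
    by (rule ba_addD[OF add Bs(3)]) (use Bs in \<open>auto simp: A_def\<close>)
  moreover have "A \<union> (B1 \<union> B2) = offdiag" using Bs unfolding A_def by auto
  moreover have "\<mu> (B1 \<union> B2) \<le> \<mu> B1 + \<mu> B2"
  proof -
    have "B1 \<union> B2 = B1 \<union> (B2 - B1)" by auto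
    moreover have "\<mu> (B1 \<union> (B2 - B1)) = \<mu> B1 + \<mu> (B2 - B1)"
      by (rule ba_addD[OF add Bs(1)]) (use Bs in auto)
    moreover have "\<mu> (B2 - B1) \<le> \<mu> B2" by (rule pos_mono[OF add pos]) (use Bs in auto)
    ultimately show ?thesis by simp
  qed
  ultimately have mA: "\<mu> A \<ge> \<gamma>" using M1 mB1 mB2 by simp
  have Aprop: "de_leeuw f p \<ge> \<gamma> \<and> de_leeuw h p \<ge> \<gamma>" if "p \<in> A" for p
    using that unfolding A_def B1_def B2_def by auto
  have cm1: "cyc_mono \<gamma> (A \<union> {(u', v')})"
  proof (rule cyc_mono_from_fun[of f])
    fix a b show "f a - f b \<le> dist a b" using ball_bound[OF fb(1), of a b] by simp
  next
    fix x y assume xy: "(x, y) \<in> A \<union> {(u', v')}"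
    show "\<gamma> * dist x y \<le> f x - f y"
    proof (cases "(x,y) \<in> A")
      case True
      then have "x \<noteq> y" using Bs unfolding offdiag_def by auto
      then have d: "dist x y > 0" by simp
      have "\<gamma> \<le> (f x - f y) / dist x y" using Aprop[OF True] by (simp add: de_leeuw_pair)
      then show ?thesis using d by (simp add: le_divide_eq)
    next
      case False then show ?thesis using xy fuv(1) by auto
    qed
  qed
  have cm2: "cyc_mono \<gamma> (A \<union> {(v', u')})"
  proof (rule cyc_mono_from_fun[of h])
    fix a b show "h a - h b \<le> dist a b" using ball_bound[OF fb(2), of a b] by simp
  next
    fix x y assume xy: "(x, y) \<in> A \<union> {(v', u')}"
    show "\<gamma> * dist x y \<le> h x - h y"
    proof (cases "(x,y) \<in> A")
      case True
      then have "x \<noteq> y" using Bs unfolding offdiag_def by auto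
      then have d: "dist x y > 0" by simp
      have "\<gamma> \<le> (h x - h y) / dist x y" using Aprop[OF True] by (simp add: de_leeuw_pair)
      then show ?thesis using d by (simp add: le_divide_eq)
    next
      case False then show ?thesis using xy fuv(2) by (auto simp: dist_commute)
    qed
  qed
  show ?thesis using Bs(3) uvne mA cm1 cm2 by blast
qed


lemma bnd_add: "bnd a \<Longrightarrow> bnd b \<Longrightarrow> bnd (\<lambda>x. a x + b x)"
  unfolding bnd_def by (metis (no_types, lifting) abs_triangle_ineq add_mono order_trans)

lemma bnd_scale: "bnd a \<Longrightarrow> bnd (\<lambda>x. c * a x)"
proof -
  assume "bnd a"
  then obtain K where K: "\<forall>x\<in>offdiag. \<bar>a x\<bar> \<le> K" unfolding bnd_def by auto
  have "\<bar>c * a x\<bar> \<le> \<bar>c\<bar> * K" if "x \<in> offdiag" for x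
    using K that by (simp add: abs_mult mult_left_mono)
  then show ?thesis unfolding bnd_def by blast
qed

lemma bnd_const: "bnd (\<lambda>x. c)"
  unfolding bnd_def by auto

lemma bnd_ind: "bnd (indicator B)"
  unfolding bnd_def by (rule exI[of _ 1]) (auto simp: indicator_def)

lemma bnd_mult_ind: "bnd g \<Longrightarrow> bnd (\<lambda>x. g x * indicator B x)"
proof -
  assume "bnd g"
  then obtain K where K: "\<forall>x\<in>offdiag. \<bar>g x\<bar> \<le> K" unfolding bnd_def by auto
  have "\<bar>g x * indicator B x\<bar> \<le> K" if "x \<in> offdiag" for x
    using K that by (auto simp: indicator_def)
  then show ?thesis unfolding bnd_def by blast
qed

lemma bnd_sum: "finite F \<Longrightarrow> (\<forall>B\<in>F. bnd (h B)) \<Longrightarrow> bnd (\<lambda>x. \<Sum>B\<in>F. h B x)"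
proof (induction F rule: finite_induct)
  case empty then show ?case by (simp add: bnd_const)
next
  case (insert B F)
  then show ?case using bnd_add[of "h B" "\<lambda>x. \<Sum>B\<in>F. h B x"] by simp
qed

lemma baint_functional:
  assumes add: "ba_add \<mu>" and pos: "pos_on \<mu>" and g: "bnd g"
    and Ladd: "\<And>a b. bnd a \<Longrightarrow> bnd b \<Longrightarrow> \<Lambda> (\<lambda>x. a x + b x) = \<Lambda> a + \<Lambda> b"
    and Lscale: "\<And>a c. bnd a \<Longrightarrow> \<Lambda> (\<lambda>x. c * a x) = c * \<Lambda> a"
    and Lmono: "\<And>a b. bnd a \<Longrightarrow> bnd b \<Longrightarrow> (\<And>x. x \<in> offdiag \<Longrightarrow> a x \<le> b x) \<Longrightarrow> \<Lambda> a \<le> \<Lambda> b"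
    and Lind: "\<And>B. B \<subseteq> offdiag \<Longrightarrow> \<Lambda> (indicator B) = \<mu> B"
  shows "has_baint \<mu> g (\<Lambda> g)"
proof (rule has_baintI)
  fix \<epsilon> :: real assume e: "\<epsilon> > 0"
  define M where "M = \<mu> offdiag"
  have M0: "M \<ge> 0" using pos unfolding pos_on_def M_def by auto
  define n where "n = Suc (nat \<lceil>M / \<epsilon>\<rceil>)"
  have n0: "n > 0" unfolding n_def by simp
  have "M / \<epsilon> < real n" unfolding n_def by linarith
  then have small: "M / real n < \<epsilon>" using e n0 by (simp add: field_simps)
  have L0: "\<Lambda> (\<lambda>x. 0) = 0" using Lscale[OF bnd_const, of 0 0] by simp
  have Lsum: "\<Lambda> (\<lambda>x. \<Sum>B\<in>F. h B x) = (\<Sum>B\<in>F. \<Lambda> (h B))" if "finite F" "\<forall>B\<in>F. bnd (h B)" for F h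
    using that
  proof (induction F rule: finite_induct)
    case empty then show ?case using L0 by simp
  next
    case (insert B F)
    have "\<Lambda> (\<lambda>x. \<Sum>C\<in>insert B F. h C x) = \<Lambda> (\<lambda>x. h B x + (\<Sum>C\<in>F. h C x))"
      using insert.hyps by simp
    also have "\<dots> = \<Lambda> (h B) + \<Lambda> (\<lambda>x. \<Sum>C\<in>F. h C x)"
      using Ladd[of "h B" "\<lambda>x. \<Sum>C\<in>F. h C x"] insert bnd_sum[of F h] by simp
    finally show ?case using insert by simp
  qed
  have Lcind: "\<Lambda> (\<lambda>x. c * indicator B x) = c * \<mu> B" if "B \<subseteq> offdiag" for B c
    using Lscale[OF bnd_ind, of c B] Lind[OF that] by simp
  show "\<exists>P. fin_partition P \<and> (\<forall>Q t. fin_partition Q \<longrightarrow> refines Q P \<longrightarrow> (\<forall>B\<in>Q. t B \<in> B) \<longrightarrow>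
          \<bar>(\<Sum>B\<in>Q. g (t B) * \<mu> B) - \<Lambda> g\<bar> < \<epsilon>)"
  proof (intro exI conjI allI impI)
    fix Q t assume Q: "fin_partition Q" "refines Q (lev n g)" "\<forall>B\<in>Q. t B \<in> B"
    have fQ: "finite Q" using Q(1) unfolding fin_partition_def by auto
    have Qod: "B \<subseteq> offdiag" if "B \<in> Q" for B using Q(1) that unfolding fin_partition_def by auto
    have dec: "(\<Sum>B\<in>Q. g x * indicator B x) = g x" if x: "x \<in> offdiag" for x
    proof -
      obtain B0 where B0: "B0 \<in> Q" "x \<in> B0" using Q(1) x unfolding fin_partition_def by auto
      have "(\<Sum>B\<in>Q. g x * indicator B x) = g x * indicator B0 x + (\<Sum>B\<in>Q - {B0}. g x * indicator B x)"
        by (rule sum.remove[OF fQ B0(1)])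
      also have "(\<Sum>B\<in>Q - {B0}. g x * indicator B x) = 0"
      proof (rule sum.neutral, rule ballI)
        fix B assume B: "B \<in> Q - {B0}"
        then have "disjnt B B0" using Q(1) B0(1) unfolding fin_partition_def pairwise_def by auto
        then have "x \<notin> B" using B0(2) unfolding disjnt_def by auto
        then show "g x * indicator B x = 0" by simp
      qed
      finally show ?thesis using B0(2) by simp
    qed
    have bQ: "\<forall>B\<in>Q. bnd (\<lambda>x. g x * indicator B x)" using bnd_mult_ind[OF g] by auto
    have "\<Lambda> g = \<Lambda> (\<lambda>x. \<Sum>B\<in>Q. g x * indicator B x)"
    proof (rule order.antisym)
      show "\<Lambda> g \<le> \<Lambda> (\<lambda>x. \<Sum>B\<in>Q. g x * indicator B x)"
        by (rule Lmono[OF g bnd_sum[OF fQ bQ]]) (simp add: dec)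
      show "\<Lambda> (\<lambda>x. \<Sum>B\<in>Q. g x * indicator B x) \<le> \<Lambda> g"
        by (rule Lmono[OF bnd_sum[OF fQ bQ] g]) (simp add: dec)
    qed
    also have "\<dots> = (\<Sum>B\<in>Q. \<Lambda> (\<lambda>x. g x * indicator B x))"
      by (rule Lsum[OF fQ bQ])
    finally have Lg: "\<Lambda> g = (\<Sum>B\<in>Q. \<Lambda> (\<lambda>x. g x * indicator B x))" .
    have tmb: "\<bar>g (t B) * \<mu> B - \<Lambda> (\<lambda>x. g x * indicator B x)\<bar> \<le> (1 / real n) * \<mu> B" if B: "B \<in> Q" for B
    proof -
      obtain C where C: "C \<in> lev n g" "B \<subseteq> C" using Q(2) B unfolding refines_def by auto
      have tB: "t B \<in> B" using Q(3) B by auto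
      have osc: "\<bar>g x - g (t B)\<bar> \<le> 1 / real n" if "x \<in> B" for x
        using lev_osc[OF n0 C(1)] C(2) tB that by blast
      have up: "\<Lambda> (\<lambda>x. g x * indicator B x) \<le> \<Lambda> (\<lambda>x. (g (t B) + 1 / real n) * indicator B x)"
      proof (rule Lmono[OF bnd_mult_ind[OF g] bnd_scale[OF bnd_ind]])
        fix x :: "'a \<times> 'a" assume "x \<in> offdiag"
        show "g x * indicator B x \<le> (g (t B) + 1 / real n) * indicator B x"
          using osc[of x] by (cases "x \<in> B") (auto simp: abs_le_iff)
      qed
      have lo: "\<Lambda> (\<lambda>x. (g (t B) - 1 / real n) * indicator B x) \<le> \<Lambda> (\<lambda>x. g x * indicator B x)"
      proof (rule Lmono[OF bnd_scale[OF bnd_ind] bnd_mult_ind[OF g]])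
        fix x :: "'a \<times> 'a" assume "x \<in> offdiag"
        show "(g (t B) - 1 / real n) * indicator B x \<le> g x * indicator B x"
          using osc[of x] by (cases "x \<in> B") (auto simp: abs_le_iff)
      qed
      have "\<Lambda> (\<lambda>x. g x * indicator B x) \<le> (g (t B) + 1 / real n) * \<mu> B" using up Lcind[OF Qod[OF B]] by simp
      moreover have "(g (t B) - 1 / real n) * \<mu> B \<le> \<Lambda> (\<lambda>x. g x * indicator B x)" using lo Lcind[OF Qod[OF B]] by simp
      ultimately show ?thesis by (simp add: algebra_simps abs_le_iff)
    qed
    have "\<bar>(\<Sum>B\<in>Q. g (t B) * \<mu> B) - \<Lambda> g\<bar> = \<bar>\<Sum>B\<in>Q. (g (t B) * \<mu> B - \<Lambda> (\<lambda>x. g x * indicator B x))\<bar>"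
      unfolding Lg by (simp add: sum_subtractf)
    also have "\<dots> \<le> (\<Sum>B\<in>Q. \<bar>g (t B) * \<mu> B - \<Lambda> (\<lambda>x. g x * indicator B x)\<bar>)" by (rule sum_abs)
    also have "\<dots> \<le> (\<Sum>B\<in>Q. (1 / real n) * \<mu> B)" by (rule sum_mono) (rule tmb)
    also have "\<dots> = (1 / real n) * (\<Sum>B\<in>Q. \<mu> B)" by (rule sum_distrib_left[symmetric])
    also have "\<dots> = M / real n" using part_sum[OF add Q(1)] unfolding M_def by simp
    finally show "\<bar>(\<Sum>B\<in>Q. g (t B) * \<mu> B) - \<Lambda> g\<bar> < \<epsilon>" using small by linarith
  qed (rule lev_part[OF g])
qed


lemma dir2:
  fixes z :: "'a::metric_space"
  assumes H: "\<forall>\<mu>. ba_measure \<mu> \<and> optimal z \<mu> \<and> ba_norm \<mu> = 1 \<longrightarrow>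
      (\<forall>\<gamma>. 0 < \<gamma> \<and> \<gamma> < 1 \<longrightarrow>
        (\<exists>A u v. A \<subseteq> (offdiag :: ('a \<times> 'a) set) \<and> u \<noteq> v \<and> \<mu> A \<ge> \<gamma> \<and>
           cyc_mono \<gamma> (A \<union> {(u, v)}) \<and> cyc_mono \<gamma> (A \<union> {(v, u)})))"
  shows "LD2P z"
  unfolding LD2P_def
proof (intro allI impI)
  fix \<phi> :: "('a \<Rightarrow> real) \<Rightarrow> real" and \<alpha> :: real
  assume "lip0_dual z \<phi> \<and> dual_norm z \<phi> = 1 \<and> \<alpha> > 0"
  then have dual: "lip0_dual z \<phi>" and dn: "dual_norm z \<phi> = 1" and a0: "\<alpha> > 0" by auto
  have odne: "(offdiag :: ('a \<times> 'a) set) \<noteq> {}"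
  proof
    assume e: "(offdiag :: ('a \<times> 'a) set) = {}"
    have eq: "x = y" for x y :: 'a using e unfolding offdiag_def by auto
    have z0: "\<phi> f = 0" if f: "f \<in> lip0_ball z" for f
    proof -
      have fz: "f z = 0" using f unfolding lip0_ball_def Lip0_def by auto
      have "(\<lambda>x. 0 * f x) = f" by (rule ext) (metis eq fz mult_zero_left)
      then show ?thesis using dual_scale[OF dual ball_Lip0[OF f], of 0] by simp
    qed
    have "dual_norm z \<phi> = (SUP f\<in>lip0_ball z. 0)" unfolding dual_norm_def
      by (rule SUP_cong) (auto simp: z0)
    also have "\<dots> = 0" using ball_zero by (intro cSUP_const) auto
    finally show False using dn by simp
  qed
  define p :: "('a \<times> 'a \<Rightarrow> real) \<Rightarrow> real" where "p g = (SUP x\<in>offdiag. g x)" for g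
  have pup: "g x \<le> p g" if bg: "bnd g" and xo: "x \<in> offdiag" for g x
  proof -
    obtain K where K: "\<forall>x\<in>offdiag. \<bar>g x\<bar> \<le> K" using bg unfolding bnd_def by auto
    have "bdd_above (g ` offdiag)" by (rule bdd_aboveI2[of _ _ K]) (use K in force)
    then show ?thesis unfolding p_def by (rule cSUP_upper[OF xo])
  qed
  have pleast: "p g \<le> K" if "\<And>x. x \<in> offdiag \<Longrightarrow> g x \<le> K" for g K
    unfolding p_def by (rule cSUP_least[OF odne]) (rule that)
  have pconst: "p (\<lambda>x. c) = c" for c unfolding p_def using odne by simp
  have psub: "p (\<lambda>x. a x + b x) \<le> p a + p b" if "a \<in> {g. bnd g}" "b \<in> {g. bnd g}" for a b
    by (rule pleast) (use pup that in \<open>auto intro: add_mono\<close>)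
  have phom: "p (\<lambda>x. c * a x) = c * p a" if a: "a \<in> {g. bnd g}" and c: "c \<ge> 0" for a c
  proof (cases "c = 0")
    case True then show ?thesis using pconst[of 0] by simp
  next
    case False
    then have c0: "c > 0" using c by simp
    have ba: "bnd a" using a by simp
    have "p (\<lambda>x. c * a x) \<le> c * p a"
      by (rule pleast) (use pup[OF ba] c in \<open>auto intro: mult_left_mono\<close>)
    moreover have "p a \<le> p (\<lambda>x. c * a x) / c"
    proof (rule pleast)
      fix x :: "'a \<times> 'a" assume x: "x \<in> offdiag"
      have "c * a x \<le> p (\<lambda>x. c * a x)" using pup[OF bnd_scale[OF ba] x] by simp
      then show "a x \<le> p (\<lambda>x. c * a x) / c" using c0 by (simp add: field_simps)
    qed
    then have "c * p a \<le> p (\<lambda>x. c * a x)" using c0 by (simp add: field_simps)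
    ultimately show ?thesis by simp
  qed
  have lip_p: "lipnorm f \<le> p (de_leeuw f)" if f: "f \<in> Lip0 z" for f
  proof (rule lipnorm_le, rule lipschitz_onI1)
    have bf: "bnd (de_leeuw f)" by (rule de_leeuw_bnd[OF Lip0_lip[OF f]])
    fix a b :: 'a
    show "\<bar>f a - f b\<bar> \<le> p (de_leeuw f) * dist a b"
    proof (cases "a = b")
      case True then show ?thesis by simp
    next
      case False
      then have d: "dist a b > 0" by simp
      have o1: "(a,b) \<in> offdiag" and o2: "(b,a) \<in> offdiag" using False unfolding offdiag_def by auto
      have "(f a - f b) / dist a b \<le> p (de_leeuw f)" using pup[OF bf o1] by (simp add: de_leeuw_pair)
      moreover have "(f b - f a) / dist a b \<le> p (de_leeuw f)" using pup[OF bf o2] by (simp add: de_leeuw_pair dist_commute)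
      ultimately have "(f a - f b) / dist a b \<le> p (de_leeuw f)" "(f b - f a) / dist a b \<le> p (de_leeuw f)" by auto
      then show ?thesis using d by (auto simp: abs_le_iff divide_le_eq algebra_simps)
    qed
  next
    obtain x y where xy: "(x, y) \<in> (offdiag :: ('a \<times> 'a) set)" using odne by auto
    then have yx: "(y, x) \<in> (offdiag :: ('a \<times> 'a) set)" unfolding offdiag_def by auto
    have bf: "bnd (de_leeuw f)" by (rule de_leeuw_bnd[OF Lip0_lip[OF f]])
    have "de_leeuw f (x,y) \<le> p (de_leeuw f)" "de_leeuw f (y,x) \<le> p (de_leeuw f)"
      using pup[OF bf xy] pup[OF bf yx] by auto
    moreover have "de_leeuw f (x,y) + de_leeuw f (y,x) = 0"
      by (simp add: de_leeuw_pair dist_commute diff_divide_distrib)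
    ultimately show "0 \<le> p (de_leeuw f)" by linarith
  qed
  define G0 where "G0 = {(de_leeuw f, \<phi> f) | f. f \<in> Lip0 z}"
  have linG0: "lingraph {g. bnd g} p G0"
  proof (rule lingraphI)
    fix a r b s assume "(a, r) \<in> G0" "(b, s) \<in> G0"
    then obtain f g where f: "f \<in> Lip0 z" "a = de_leeuw f" "r = \<phi> f" and g: "g \<in> Lip0 z" "b = de_leeuw g" "s = \<phi> g"
      unfolding G0_def by auto
    have "(de_leeuw (\<lambda>x. f x + g x), \<phi> (\<lambda>x. f x + g x)) \<in> G0" unfolding G0_def using Lip0_add[OF f(1) g(1)] by auto
    then show "((\<lambda>x. a x + b x), r + s) \<in> G0" using f g by (simp add: de_leeuw_add dual_add[OF dual])
  next
    fix a r c assume "(a, r) \<in> G0"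
    then obtain f where f: "f \<in> Lip0 z" "a = de_leeuw f" "r = \<phi> f" unfolding G0_def by auto
    have "(de_leeuw (\<lambda>x. c * f x), \<phi> (\<lambda>x. c * f x)) \<in> G0" unfolding G0_def using Lip0_scale[OF f(1)] by auto
    then show "((\<lambda>x. c * a x), c * r) \<in> G0" using f by (simp add: de_leeuw_scale dual_scale[OF dual])
  next
    fix a r assume "(a, r) \<in> G0"
    then obtain f where f: "f \<in> Lip0 z" "a = de_leeuw f" "r = \<phi> f" unfolding G0_def by auto
    have "\<phi> f \<le> lipnorm f" using dual_bound[OF dual dn f(1)] by simp
    then show "a \<in> {g. bnd g} \<and> r \<le> p a" using f lip_p[OF f(1)] de_leeuw_bnd[OF Lip0_lip[OF f(1)]] by auto
  qed
  have G0ne: "G0 \<noteq> {}" unfolding G0_def using Lip0_zero by auto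
  obtain \<psi> where psi0: "\<forall>a r. (a,r)\<in>G0 \<longrightarrow> \<psi> a = r" and psile: "\<forall>a\<in>{g. bnd g}. \<psi> a \<le> p a"
    and psiadd: "\<forall>a\<in>{g. bnd g}. \<forall>b\<in>{g. bnd g}. \<psi> (\<lambda>x. a x + b x) = \<psi> a + \<psi> b"
    and psiscale: "\<forall>a\<in>{g. bnd g}. \<forall>c. \<psi> (\<lambda>x. c * a x) = c * \<psi> a"
  proof -
    have Vadd: "(\<lambda>x. a x + b x) \<in> {g. bnd g}" if "a \<in> {g. bnd g}" "b \<in> {g. bnd g}" for a b
      using that bnd_add by auto
    have Vscale: "(\<lambda>x. c * a x) \<in> {g. bnd g}" if "a \<in> {g. bnd g}" for a c
      using that bnd_scale by auto
    have "\<exists>\<psi>. (\<forall>a r. (a,r)\<in>G0 \<longrightarrow> \<psi> a = r) \<and> (\<forall>a\<in>{g. bnd g}. \<psi> a \<le> p a) \<and>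
             (\<forall>a\<in>{g. bnd g}. \<forall>b\<in>{g. bnd g}. \<psi> (\<lambda>x. a x + b x) = \<psi> a + \<psi> b) \<and> (\<forall>a\<in>{g. bnd g}. \<forall>c. \<psi> (\<lambda>x. c * a x) = c * \<psi> a)"
      by (rule HB[OF Vadd Vscale psub phom linG0 G0ne])
    then show ?thesis using that by blast
  qed
  have psiPhi: "\<psi> (de_leeuw f) = \<phi> f" if "f \<in> Lip0 z" for f
    using psi0 that unfolding G0_def by auto
  have Ladd: "\<psi> (\<lambda>x. a x + b x) = \<psi> a + \<psi> b" if "bnd a" "bnd b" for a b using psiadd that by auto
  have Lscale: "\<psi> (\<lambda>x. c * a x) = c * \<psi> a" if "bnd a" for a c using psiscale that by auto
  have Lmono: "\<psi> a \<le> \<psi> b" if ab: "bnd a" "bnd b" "\<And>x. x \<in> offdiag \<Longrightarrow> a x \<le> b x" for a b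
  proof -
    have bm: "bnd (\<lambda>x. (-1) * b x)" by (rule bnd_scale[OF ab(2)])
    have "\<psi> (\<lambda>x. a x + (-1) * b x) = \<psi> a + (-1) * \<psi> b"
      using Ladd[OF ab(1) bm] Lscale[OF ab(2), of "-1"] by simp
    moreover have "\<psi> (\<lambda>x. a x + (-1) * b x) \<le> p (\<lambda>x. a x + (-1) * b x)"
      using psile bnd_add[OF ab(1) bm] by auto
    moreover have "p (\<lambda>x. a x + (-1) * b x) \<le> 0" by (rule pleast) (use ab(3) in auto)
    ultimately show ?thesis by simp
  qed
  have L1: "\<psi> (\<lambda>x. 1) = 1"
  proof -
    have "\<psi> (\<lambda>x. 1) \<le> 1" using psile bnd_const[of 1] pconst[of 1] by auto
    moreover have "\<psi> (\<lambda>x. (-1) * 1) \<le> -1" using psile bnd_const[of "(-1) * 1"] pconst[of "(-1) * 1"] by auto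
    moreover have "\<psi> (\<lambda>x. (-1) * 1) = (-1) * \<psi> (\<lambda>x. 1)" using Lscale[OF bnd_const[of 1], of "-1"] by simp
    ultimately show ?thesis by simp
  qed
  define \<mu> :: "('a \<times> 'a) set \<Rightarrow> real" where "\<mu> A = \<psi> (indicator (A \<inter> offdiag))" for A
  have Lind: "\<psi> (indicator B) = \<mu> B" if "B \<subseteq> offdiag" for B
    using that unfolding \<mu>_def by (simp add: Int_absorb2)
  have add: "ba_add \<mu>" unfolding ba_add_def
  proof (intro allI impI)
    fix A B :: "('a \<times> 'a) set" assume AB: "A \<subseteq> offdiag \<and> B \<subseteq> offdiag \<and> A \<inter> B = {}"
    have "(indicator ((A \<union> B) \<inter> offdiag) :: ('a \<times> 'a \<Rightarrow> real)) = (\<lambda>x. indicator (A \<inter> offdiag) x + indicator (B \<inter> offdiag) x)"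
      using AB by (auto simp: indicator_def fun_eq_iff)
    then show "\<mu> (A \<union> B) = \<mu> A + \<mu> B" unfolding \<mu>_def using Ladd[OF bnd_ind bnd_ind] by simp
  qed
  have L0: "\<psi> (\<lambda>x. 0) = 0" using Lscale[OF bnd_const[of 0], of 0] by simp
  have pos: "pos_on \<mu>" unfolding pos_on_def \<mu>_def
  proof (intro allI impI)
    fix A :: "('a \<times> 'a) set"
    have "\<psi> (\<lambda>x. 0) \<le> \<psi> (indicator (A \<inter> offdiag))" by (rule Lmono[OF bnd_const bnd_ind]) auto
    then show "0 \<le> \<psi> (indicator (A \<inter> offdiag))" using L0 by simp
  qed
  have mod: "\<mu> offdiag = 1"
  proof -
    have "\<psi> (indicator offdiag) = \<psi> (\<lambda>x. 1)"
      by (rule order.antisym; rule Lmono[OF bnd_ind bnd_const] Lmono[OF bnd_const bnd_ind]) auto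
    then show ?thesis using L1 Lind[of offdiag] by simp
  qed
  have mle: "\<mu> A \<le> 1" for A
  proof -
    have "\<psi> (indicator (A \<inter> offdiag)) \<le> \<psi> (\<lambda>x. 1)" by (rule Lmono[OF bnd_ind bnd_const]) (auto simp: indicator_def)
    then show ?thesis using L1 unfolding \<mu>_def by simp
  qed
  have bam: "ba_measure \<mu>"
    unfolding ba_measure_def
  proof (intro conjI)
    show "\<forall>A B. A \<subseteq> offdiag \<and> B \<subseteq> offdiag \<and> A \<inter> B = {} \<longrightarrow> \<mu> (A \<union> B) = \<mu> A + \<mu> B"
      using add unfolding ba_add_def by blast
    show "\<exists>C. \<forall>A. A \<subseteq> offdiag \<longrightarrow> \<bar>\<mu> A\<bar> \<le> C"
      using pos mle unfolding pos_on_def by (intro exI[of _ 1]) auto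
  qed
  have bn: "ba_norm \<mu> = 1" using ba_norm_pos[OF add pos] mod by simp
  have PhiEq: "Phi_star \<mu> f = \<phi> f" if f: "f \<in> Lip0 z" for f
  proof -
    have "has_baint \<mu> (de_leeuw f) (\<psi> (de_leeuw f))"
      by (rule baint_functional[OF add pos de_leeuw_bnd[OF Lip0_lip[OF f]] Ladd Lscale Lmono Lind])
    then have "Phi_star \<mu> f = \<psi> (de_leeuw f)" unfolding Phi_star_def by (rule baint_eq)
    then show ?thesis using psiPhi[OF f] by simp
  qed
  have opt: "optimal z \<mu>"
    unfolding optimal_def
  proof (intro conjI)
    show "\<forall>A. A \<subseteq> offdiag \<longrightarrow> 0 \<le> \<mu> A" using pos unfolding pos_on_def by blast
    have "dual_norm z (Phi_star \<mu>) = dual_norm z \<phi>" unfolding dual_norm_def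
      by (rule SUP_cong) (auto simp: PhiEq ball_Lip0)
    then show "dual_norm z (Phi_star \<mu>) = ba_norm \<mu>" using dn bn by simp
  qed
  have Hmu: "\<forall>\<gamma>. 0 < \<gamma> \<and> \<gamma> < 1 \<longrightarrow> (\<exists>A u v. A \<subseteq> (offdiag :: ('a \<times> 'a) set) \<and> u \<noteq> v \<and> \<mu> A \<ge> \<gamma> \<and>
           cyc_mono \<gamma> (A \<union> {(u, v)}) \<and> cyc_mono \<gamma> (A \<union> {(v, u)}))"
    using H bam opt bn by blast
  have mkfun: "\<exists>h. h \<in> lip0_ball z \<and> (\<forall>a b. (a, b) \<in> S \<longrightarrow> h a - h b \<ge> \<gamma> * dist a b)"
    if cm: "cyc_mono \<gamma> S" for \<gamma> S
  proof -
    obtain h where h: "\<forall>a b. h a - h b \<le> dist a b" "\<forall>a b. (a,b) \<in> S \<longrightarrow> h a - h b \<ge> \<gamma> * dist a b" "h z = 0"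
      using cyc_mono_fun[OF cm, of z] by blast
    have "lipschitz_on 1 UNIV h"
      by (rule lipschitz_onI1) (use h(1) in \<open>auto simp: abs_le_iff dist_commute\<close>, metis dist_commute)
    then have "h \<in> lip0_ball z" using h(3) by (rule lip1_ball)
    then show ?thesis using h(2) by blast
  qed
  have K: "\<exists>h1 h2. h1 \<in> slice z \<phi> \<alpha> \<and> h2 \<in> slice z \<phi> \<alpha> \<and> 2 * \<gamma> \<le> lipnorm (\<lambda>x. h1 x - h2 x)"
    if g: "0 < \<gamma>" "\<gamma> < 1" "(1 + \<gamma>) * \<gamma> - 1 > 1 - \<alpha>" for \<gamma>
  proof -
    obtain A u v where A: "A \<subseteq> offdiag" "u \<noteq> v" "\<mu> A \<ge> \<gamma>" "cyc_mono \<gamma> (A \<union> {(u, v)})" "cyc_mono \<gamma> (A \<union> {(v, u)})"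
      using Hmu g by blast
    have mc: "\<mu> (offdiag - A) = 1 - \<mu> A"
    proof -
      have "\<mu> (A \<union> (offdiag - A)) = \<mu> A + \<mu> (offdiag - A)" by (rule ba_addD[OF add A(1)]) auto
      moreover have "A \<union> (offdiag - A) = offdiag" using A(1) by auto
      ultimately show ?thesis using mod by simp
    qed
    have inslice: "h \<in> slice z \<phi> \<alpha>"
      if h: "h \<in> lip0_ball z" "\<forall>a b. (a, b) \<in> A \<longrightarrow> h a - h b \<ge> \<gamma> * dist a b" for h
    proof -
      have hL: "h \<in> Lip0 z" by (rule ball_Lip0[OF h(1)])
      have hb: "\<bar>de_leeuw h q\<bar> \<le> 1" for q
        using de_leeuw_bound[OF Lip0_lip[OF hL], of q] h(1) unfolding lip0_ball_def by auto
      have b1: "bnd (\<lambda>x. \<gamma> * indicator A x)" "bnd (\<lambda>x. (-1) * indicator (offdiag - A) x)"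
        by (rule bnd_scale[OF bnd_ind])+
      have "\<psi> (\<lambda>x. \<gamma> * indicator A x + (-1) * indicator (offdiag - A) x) \<le> \<psi> (de_leeuw h)"
      proof (rule Lmono[OF bnd_add[OF b1] de_leeuw_bnd[OF Lip0_lip[OF hL]]])
        fix q :: "'a \<times> 'a" assume q: "q \<in> offdiag"
        obtain x y where xy: "q = (x, y)" by (cases q)
        show "\<gamma> * indicator A q + (-1) * indicator (offdiag - A) q \<le> de_leeuw h q"
        proof (cases "q \<in> A")
          case True
          then have "x \<noteq> y" using A(1) xy unfolding offdiag_def by auto
          then have d: "dist x y > 0" by simp
          have "\<gamma> * dist x y \<le> h x - h y" using h(2) True xy by auto
          then have "\<gamma> \<le> (h x - h y) / dist x y" using d by (simp add: le_divide_eq)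
          then show ?thesis using True xy by (simp add: de_leeuw_pair)
        next
          case False then show ?thesis using q hb[of q] by (auto simp: abs_le_iff)
        qed
      qed
      moreover have "\<psi> (\<lambda>x. \<gamma> * indicator A x + (-1) * indicator (offdiag - A) x) = \<gamma> * \<mu> A + (-1) * \<mu> (offdiag - A)"
        using Ladd[OF b1] Lscale[OF bnd_ind, of \<gamma> A] Lscale[OF bnd_ind, of "-1" "offdiag - A"]
          Lind[OF A(1)] Lind[of "offdiag - A"] by auto
      ultimately have "\<gamma> * \<mu> A - (1 - \<mu> A) \<le> \<phi> h" using psiPhi[OF hL] mc by simp
      moreover have "(1 + \<gamma>) * \<gamma> \<le> (1 + \<gamma>) * \<mu> A" using A(3) g by (intro mult_left_mono) auto
      ultimately have "\<phi> h > 1 - \<alpha>" using g(3) by (simp add: algebra_simps)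
      then show ?thesis using h(1) unfolding slice_def by auto
    qed
    obtain h1 where h1: "h1 \<in> lip0_ball z" "\<forall>a b. (a, b) \<in> A \<union> {(u, v)} \<longrightarrow> h1 a - h1 b \<ge> \<gamma> * dist a b"
      using mkfun[OF A(4)] by blast
    obtain h2 where h2: "h2 \<in> lip0_ball z" "\<forall>a b. (a, b) \<in> A \<union> {(v, u)} \<longrightarrow> h2 a - h2 b \<ge> \<gamma> * dist a b"
      using mkfun[OF A(5)] by blast
    have s1: "h1 \<in> slice z \<phi> \<alpha>" by (rule inslice) (use h1 in auto)
    have s2: "h2 \<in> slice z \<phi> \<alpha>" by (rule inslice) (use h2 in auto)
    have "2 * \<gamma> \<le> lipnorm (\<lambda>x. h1 x - h2 x)"
    proof -
      have lip: "\<exists>C. lipschitz_on C UNIV (\<lambda>x. h1 x - h2 x)"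
        using Lip0_add[OF ball_Lip0[OF h1(1)] Lip0_scale[OF ball_Lip0[OF h2(1)], of "-1"]]
        unfolding Lip0_def by simp
      have "\<bar>(h1 u - h2 u) - (h1 v - h2 v)\<bar> \<le> lipnorm (\<lambda>x. h1 x - h2 x) * dist u v"
        using lip_bound[OF lip, of u v] by simp
      moreover have "h1 u - h1 v \<ge> \<gamma> * dist u v" "h2 v - h2 u \<ge> \<gamma> * dist v u" using h1(2) h2(2) by auto
      ultimately have "2 * \<gamma> * dist u v \<le> lipnorm (\<lambda>x. h1 x - h2 x) * dist u v"
        by (simp add: dist_commute abs_le_iff algebra_simps)
      moreover have "dist u v > 0" using A(2) by simp
      ultimately show ?thesis by simp
    qed
    then show ?thesis using s1 s2 by blast
  qed
  have choose: "\<exists>\<gamma>. 0 < \<gamma> \<and> \<gamma> < 1 \<and> (1 + \<gamma>) * \<gamma> - 1 > 1 - \<alpha> \<and> 2 * \<gamma> \<ge> 2 - e" if e: "e > 0" for e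
  proof -
    define \<gamma> where "\<gamma> = max (1/2) (max (1 - \<alpha>/4) (1 - e/2))"
    have ge: "\<gamma> \<ge> 1/2" "\<gamma> \<ge> 1 - \<alpha>/4" "\<gamma> \<ge> 1 - e/2" unfolding \<gamma>_def by auto
    have lt: "\<gamma> < 1" unfolding \<gamma>_def using a0 e by simp
    have g1: "0 < \<gamma>" "\<gamma> < 1" "1 - \<gamma> \<le> \<alpha>/4" "2 * \<gamma> \<ge> 2 - e" using ge lt by linarith+
    have "(1 - \<gamma>) * (\<gamma> + 2) \<le> (1 - \<gamma>) * 3" using g1 by (intro mult_left_mono) auto
    moreover have "(1 - \<gamma>) * 3 < \<alpha>" using g1 a0 by (simp add: algebra_simps)
    ultimately have "(1 - \<gamma>) * (\<gamma> + 2) < \<alpha>" by (rule le_less_trans)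
    then have "(1 + \<gamma>) * \<gamma> - 1 > 1 - \<alpha>" by (simp add: algebra_simps)
    then show ?thesis using g1 by blast
  qed
  let ?SS = "slice z \<phi> \<alpha> \<times> slice z \<phi> \<alpha>"
  let ?F = "\<lambda>q. lipnorm (\<lambda>x. fst q x - snd q x)"
  have bddS: "bdd_above (?F ` ?SS)"
    by (rule bdd_aboveI2[of _ _ 2]) (auto simp: slice_def intro: ball_diff_le2)
  have Sne: "?SS \<noteq> {}"
  proof -
    obtain \<gamma> where g: "0 < \<gamma>" "\<gamma> < 1" "(1 + \<gamma>) * \<gamma> - 1 > 1 - \<alpha>"
      using choose[of 1] by auto
    obtain h1 h2 where "h1 \<in> slice z \<phi> \<alpha>" "h2 \<in> slice z \<phi> \<alpha>"
      using K[OF g] by auto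
    then have "(h1, h2) \<in> ?SS" by simp
    then show ?thesis by auto
  qed
  have le2: "(SUP q\<in>?SS. ?F q) \<le> 2"
    by (rule cSUP_least[OF Sne]) (auto simp: slice_def intro: ball_diff_le2)
  have ge2: "2 \<le> (SUP q\<in>?SS. ?F q)"
  proof (rule field_le_epsilon)
    fix e :: real assume e: "e > 0"
    obtain \<gamma> where g: "0 < \<gamma>" "\<gamma> < 1" "(1 + \<gamma>) * \<gamma> - 1 > 1 - \<alpha>" "2 * \<gamma> \<ge> 2 - e"
      using choose[OF e] by blast
    obtain h1 h2 where hh: "h1 \<in> slice z \<phi> \<alpha>" "h2 \<in> slice z \<phi> \<alpha>" "2 * \<gamma> \<le> lipnorm (\<lambda>x. h1 x - h2 x)"
      using K[OF g(1-3)] by blast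
    have "?F (h1, h2) \<le> (SUP q\<in>?SS. ?F q)" by (rule cSUP_upper[OF _ bddS]) (use hh in auto)
    then show "2 \<le> (SUP q\<in>?SS. ?F q) + e" using hh(3) g(4) by simp
  qed
  show "lip0_diam (slice z \<phi> \<alpha>) = 2" unfolding lip0_diam_def using le2 ge2 by simp
qed



theorem proposition3p2:
  fixes z :: "'a::metric_space"
  shows "LD2P z \<longleftrightarrow>
    (\<forall>\<mu>. ba_measure \<mu> \<and> optimal z \<mu> \<and> ba_norm \<mu> = 1 \<longrightarrow>
      (\<forall>\<gamma>. 0 < \<gamma> \<and> \<gamma> < 1 \<longrightarrow>
        (\<exists>A u v. A \<subseteq> (offdiag :: ('a \<times> 'a) set) \<and> u \<noteq> v \<and> \<mu> A \<ge> \<gamma> \<and>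
           cyc_mono \<gamma> (A \<union> {(u, v)}) \<and> cyc_mono \<gamma> (A \<union> {(v, u)}))))"
proof (rule iffI)
  assume ld: "LD2P z"
  show "\<forall>\<mu>. ba_measure \<mu> \<and> optimal z \<mu> \<and> ba_norm \<mu> = 1 \<longrightarrow>
      (\<forall>\<gamma>. 0 < \<gamma> \<and> \<gamma> < 1 \<longrightarrow>
        (\<exists>A u v. A \<subseteq> (offdiag :: ('a \<times> 'a) set) \<and> u \<noteq> v \<and> \<mu> A \<ge> \<gamma> \<and>
           cyc_mono \<gamma> (A \<union> {(u, v)}) \<and> cyc_mono \<gamma> (A \<union> {(v, u)})))"
  proof (intro allI impI)
    fix \<mu> :: "('a \<times> 'a) set \<Rightarrow> real" and \<gamma> :: real
    assume m: "ba_measure \<mu> \<and> optimal z \<mu> \<and> ba_norm \<mu> = 1" and g: "0 < \<gamma> \<and> \<gamma> < 1"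
    show "\<exists>A u v. A \<subseteq> (offdiag :: ('a \<times> 'a) set) \<and> u \<noteq> v \<and> \<mu> A \<ge> \<gamma> \<and>
           cyc_mono \<gamma> (A \<union> {(u, v)}) \<and> cyc_mono \<gamma> (A \<union> {(v, u)})"
      using m g by (intro dir1[OF ld]) auto
  qed
next
  assume H: "\<forall>\<mu>. ba_measure \<mu> \<and> optimal z \<mu> \<and> ba_norm \<mu> = 1 \<longrightarrow>
      (\<forall>\<gamma>. 0 < \<gamma> \<and> \<gamma> < 1 \<longrightarrow>
        (\<exists>A u v. A \<subseteq> (offdiag :: ('a \<times> 'a) set) \<and> u \<noteq> v \<and> \<mu> A \<ge> \<gamma> \<and>
           cyc_mono \<gamma> (A \<union> {(u, v)}) \<and> cyc_mono \<gamma> (A \<union> {(v, u)})))"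
  show "LD2P z" by (rule dir2[OF H])
qed

end
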